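(* Consider the following game over slots $1,\dots,T$ with $N\ge2$ users and an integer $1\le k<N$. The BS chooses a probability distribution on $k$-element subsets of the users. In every slot it independently schedules a random $k$-subset drawn from this distribution. The adversary chooses a blocking matrix $\sigma\in\{0,1\}^{N\times T}$, where $\sigma_i(t)=0$ means user $i$ is blocked in slot $t$. Feasibility means $\sum_{i,t}(1-\sigma_i(t))\le\alpha T$ and $\sum_i(1-\sigma_i(t))\le k_a$ for each $t$, where $k_a\ge1$ and $0<\alpha<1$. Ages satisfy $a_i(1)=1$, $a_i(t+1)=1$ if user $i$ is scheduled and not blocked in slot $t$, and $a_i(t+1)=a_i(t)+1$ otherwise. The payoff is the average age $\frac1T\sum_{t=1}^T\frac1N\sum_i\mathbb E[a_i(t)]$; the BS minimizes it and the adversary maximizes it. Then, for all sufficiently large $T$ with $\alpha T\in\mathbb Z$, this game has no Nash equilibrium. Here the BS's strategies are the distributions on $k$-subsets, and the adversary's strategies are the feasible blocking matrices. *)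

theory Defs
  imports "HOL-Probability.Probability"
begin

(* Users are indexed 0..<N, slots 1..T.
   sigma i t = True  means  sigma_i(t) = 1 (user i NOT blocked in slot t). *)

definition bs_strategy :: "nat \<Rightarrow> nat \<Rightarrow> nat set pmf \<Rightarrow> bool" where
  "bs_strategy N k p \<longleftrightarrow> set_pmf p \<subseteq> {S. S \<subseteq> {..<N} \<and> card S = k}"

definition feasible :: "nat \<Rightarrow> nat \<Rightarrow> real \<Rightarrow> nat \<Rightarrow> (nat \<Rightarrow> nat \<Rightarrow> bool) \<Rightarrow> bool" where
  "feasible N T \<alpha> ka \<sigma> \<longleftrightarrow>
     (\<Sum>i<N. \<Sum>t=1..T. 1 - real (of_bool (\<sigma> i t))) \<le> \<alpha> * real T \<and>
     (\<forall>t\<in>{1..T}. (\<Sum>i<N. 1 - real (of_bool (\<sigma> i t))) \<le> real ka)"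

definition sched_pmf :: "nat set pmf \<Rightarrow> nat \<Rightarrow> (nat \<Rightarrow> nat set) pmf" where
  "sched_pmf p T = Pi_pmf {1..T} {} (\<lambda>_. p)"

(* age a_i(t) for t \<ge> 1; the value at t = 0 is unused *)
fun age :: "(nat \<Rightarrow> nat set) \<Rightarrow> (nat \<Rightarrow> nat \<Rightarrow> bool) \<Rightarrow> nat \<Rightarrow> nat \<Rightarrow> nat" where
  "age s \<sigma> i 0 = 1"
| "age s \<sigma> i (Suc 0) = 1"
| "age s \<sigma> i (Suc (Suc t)) =
     (if i \<in> s (Suc t) \<and> \<sigma> i (Suc t) then 1 else age s \<sigma> i (Suc t) + 1)"

definition payoff :: "nat \<Rightarrow> nat \<Rightarrow> nat set pmf \<Rightarrow> (nat \<Rightarrow> nat \<Rightarrow> bool) \<Rightarrow> real" where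
  "payoff N T p \<sigma> =
     (1 / real T) * (\<Sum>t=1..T. (1 / real N) *
        (\<Sum>i<N. measure_pmf.expectation (sched_pmf p T) (\<lambda>s. real (age s \<sigma> i t))))"

definition nash_eq :: "nat \<Rightarrow> nat \<Rightarrow> nat \<Rightarrow> real \<Rightarrow> nat \<Rightarrow> nat set pmf \<Rightarrow> (nat \<Rightarrow> nat \<Rightarrow> bool) \<Rightarrow> bool" where
  "nash_eq N k T \<alpha> ka p \<sigma> \<longleftrightarrow>
     bs_strategy N k p \<and> feasible N T \<alpha> ka \<sigma> \<and>
     (\<forall>p'. bs_strategy N k p' \<longrightarrow> payoff N T p \<sigma> \<le> payoff N T p' \<sigma>) \<and>
     (\<forall>\<sigma>'. feasible N T \<alpha> ka \<sigma>' \<longrightarrow> payoff N T p \<sigma>' \<le> payoff N T p \<sigma>)"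

end

theory Submission
  imports Defs
begin


definition qm :: "nat set pmf \<Rightarrow> nat \<Rightarrow> real" where
  "qm p i = measure_pmf.prob p {S. i \<in> S}"

definition ee :: "real \<Rightarrow> (nat \<Rightarrow> bool) \<Rightarrow> nat \<Rightarrow> real" where
  "ee x \<rho> t = 1 + (\<Sum>a\<in>{1..<t}. \<Prod>s\<in>{a..<t}. (if \<rho> s then 1 - x else 1))"

lemma sum_prod_step:
  fixes h :: "nat \<Rightarrow> 'a::comm_ring_1"
  assumes "1 \<le> t"
  shows "(\<Sum>a\<in>{1..<Suc t}. \<Prod>x\<in>{a..<Suc t}. h x) = h t * (1 + (\<Sum>a\<in>{1..<t}. \<Prod>x\<in>{a..<t}. h x))"
proof -
  have e1: "{1..<Suc t} = insert t {1..<t}" using assms by auto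
  have "(\<Sum>a\<in>{1..<Suc t}. \<Prod>x\<in>{a..<Suc t}. h x) = (\<Prod>x\<in>{t..<Suc t}. h x) + (\<Sum>a\<in>{1..<t}. \<Prod>x\<in>{a..<Suc t}. h x)"
    unfolding e1 by (subst sum.insert) auto
  also have "(\<Sum>a\<in>{1..<t}. \<Prod>x\<in>{a..<Suc t}. h x) = (\<Sum>a\<in>{1..<t}. h t * (\<Prod>x\<in>{a..<t}. h x))"
  proof (rule sum.cong)
    fix a assume "a \<in> {1..<t}"
    hence "{a..<Suc t} = insert t {a..<t}" by auto
    thus "(\<Prod>x\<in>{a..<Suc t}. h x) = h t * (\<Prod>x\<in>{a..<t}. h x)" by simp
  qed simp
  finally show ?thesis by (simp add: sum_distrib_left algebra_simps)
qed

lemma age_explicit: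
  "real (age s \<sigma> i t) = 1 + (\<Sum>a\<in>{1..<t}. \<Prod>x\<in>{a..<t}. (if i \<in> s x \<and> \<sigma> i x then 0 else 1))"
proof (induction s \<sigma> i t rule: age.induct)
  case (3 s \<sigma> i t)
  show ?case
    by (subst sum_prod_step) (use 3 in auto)
qed auto

lemma ee_step: "1 \<le> t \<Longrightarrow> ee x \<rho> (Suc t) = 1 + (if \<rho> t then 1 - x else 1) * ee x \<rho> t"
  unfolding ee_def by (subst sum_prod_step) auto

lemma ee_1[simp]: "ee x \<rho> (Suc 0) = 1" by (simp add: ee_def)

lemma exp_indic:
  "measure_pmf.expectation p (\<lambda>v. if i \<in> v \<and> b then 0 else 1 :: real) = (if b then 1 - qm p i else 1)"
proof (cases b)
  case True
  have "(\<lambda>v. if i \<in> v \<and> b then 0 else 1 :: real) = (\<lambda>v. 1 - indicator {S. i \<in> S} v)"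
    using True by (auto simp: indicator_def)
  moreover have "measure_pmf.expectation p (\<lambda>v. 1 - indicator {S. i \<in> S} v :: real) = 1 - qm p i"
    by (subst Bochner_Integration.integral_diff) (auto simp: qm_def intro!: measure_pmf.integrable_const_bound[where B=1])
  ultimately show ?thesis using True by simp
qed simp

lemma exp_prod:
  assumes "{a..<t} \<subseteq> {1..T}"
  shows "measure_pmf.expectation (sched_pmf p T) (\<lambda>s. \<Prod>x\<in>{a..<t}. (if i \<in> s x \<and> \<sigma> i x then 0 else 1 :: real))
     = (\<Prod>x\<in>{a..<t}. (if \<sigma> i x then 1 - qm p i else 1))"
proof -
  define f where "f x v = (if x \<in> {a..<t} then (if i \<in> v \<and> \<sigma> i x then 0 else 1) else (1::real))" for x v
  have "measure_pmf.expectation (sched_pmf p T) (\<lambda>s. \<Prod>x\<in>{1..T}. f x (s x)) = (\<Prod>x\<in>{1..T}. measure_pmf.expectation p (f x))"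
    unfolding sched_pmf_def
    by (rule expectation_prod_Pi_pmf) (auto simp: f_def intro!: measure_pmf.integrable_const_bound[where B=1])
  moreover have "(\<lambda>s. \<Prod>x\<in>{1..T}. f x (s x)) = (\<lambda>s. \<Prod>x\<in>{a..<t}. (if i \<in> s x \<and> \<sigma> i x then 0 else 1 :: real))"
  proof
    fix s
    show "(\<Prod>x\<in>{1..T}. f x (s x)) = (\<Prod>x\<in>{a..<t}. (if i \<in> s x \<and> \<sigma> i x then 0 else 1 :: real))"
      using assms by (intro prod.mono_neutral_cong_right) (auto simp: f_def)
  qed
  moreover have "(\<Prod>x\<in>{1..T}. measure_pmf.expectation p (f x)) = (\<Prod>x\<in>{a..<t}. (if \<sigma> i x then 1 - qm p i else 1))"
  proof -
    have fi: "f x = (\<lambda>v. if i \<in> v \<and> \<sigma> i x then 0 else 1)" if "x \<in> {a..<t}" for x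
      using that by (auto simp: f_def)
    have fo: "f x = (\<lambda>v. 1)" if "x \<notin> {a..<t}" for x
      using that by (auto simp: f_def)
    show ?thesis
      using assms by (intro prod.mono_neutral_cong_right) (auto simp: fi fo exp_indic)
  qed
  ultimately show ?thesis by simp
qed

lemma exp_age:
  assumes "t \<le> Suc T"
  shows "measure_pmf.expectation (sched_pmf p T) (\<lambda>s. real (age s \<sigma> i t)) = ee (qm p i) (\<sigma> i) t"
proof -
  have "measure_pmf.expectation (sched_pmf p T) (\<lambda>s. real (age s \<sigma> i t)) =
     measure_pmf.expectation (sched_pmf p T) (\<lambda>s. 1 + (\<Sum>a\<in>{1..<t}. \<Prod>x\<in>{a..<t}. (if i \<in> s x \<and> \<sigma> i x then 0 else 1 :: real)))"
    by (simp add: age_explicit)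
  also have "\<dots> = 1 + (\<Sum>a\<in>{1..<t}. measure_pmf.expectation (sched_pmf p T) (\<lambda>s. \<Prod>x\<in>{a..<t}. (if i \<in> s x \<and> \<sigma> i x then 0 else 1 :: real)))"
  proof -
    have b: "0 \<le> (\<Prod>x\<in>{a..<t}. (if i \<in> s x \<and> \<sigma> i x then 0 else 1 :: real)) \<and> (\<Prod>x\<in>{a..<t}. (if i \<in> s x \<and> \<sigma> i x then 0 else 1 :: real)) \<le> 1" for a s
      by (auto intro!: prod_nonneg prod_le_1)
    have int: "integrable (measure_pmf (sched_pmf p T)) (\<lambda>s. \<Prod>x\<in>{a..<t}. (if i \<in> s x \<and> \<sigma> i x then 0 else 1 :: real))" for a
      by (rule measure_pmf.integrable_const_bound[where B=1]) (use b in auto)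
    show ?thesis
      by (subst Bochner_Integration.integral_add) (auto intro!: Bochner_Integration.integrable_sum int simp: Bochner_Integration.integral_sum[OF int])
  qed
  also have "\<dots> = ee (qm p i) (\<sigma> i) t"
    unfolding ee_def using assms by (intro arg_cong2[where f="(+)"] refl sum.cong exp_prod) auto
  finally show ?thesis .
qed



definition FF :: "real \<Rightarrow> (nat \<Rightarrow> bool) \<Rightarrow> nat \<Rightarrow> real" where
  "FF x \<rho> T = (\<Sum>t\<in>{1..T}. ee x \<rho> t)"

lemma payoff_eq:
  "payoff N T p \<sigma> = (1 / real T) * (1 / real N) * (\<Sum>i<N. FF (qm p i) (\<sigma> i) T)"
proof -
  have "payoff N T p \<sigma> = (1 / real T) * (\<Sum>t\<in>{1..T}. (1 / real N) * (\<Sum>i<N. ee (qm p i) (\<sigma> i) t))"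
    unfolding payoff_def by (intro arg_cong2[where f="(*)"] refl sum.cong) (auto simp: exp_age)
  also have "\<dots> = (1 / real T) * (1 / real N) * (\<Sum>i<N. FF (qm p i) (\<sigma> i) T)"
  proof -
    have "(\<Sum>t\<in>{1..T}. (1 / real N) * (\<Sum>i<N. ee (qm p i) (\<sigma> i) t)) = (1 / real N) * (\<Sum>t\<in>{1..T}. \<Sum>i<N. ee (qm p i) (\<sigma> i) t)"
      by (simp add: sum_distrib_left)
    also have "\<dots> = (1 / real N) * (\<Sum>i<N. \<Sum>t\<in>{1..T}. ee (qm p i) (\<sigma> i) t)"
      by (simp only: sum.swap[of _ "{1..T}"])
    finally show ?thesis unfolding FF_def by simp
  qed
  finally show ?thesis .
qed

lemma sum_qm:
  assumes "bs_strategy N k p"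
  shows "(\<Sum>i<N. qm p i) = real k"
proof -
  have int: "integrable (measure_pmf p) (indicator {S. i \<in> S} :: nat set \<Rightarrow> real)" for i
    by (rule measure_pmf.integrable_const_bound[where B=1]) auto
  have "(\<Sum>i<N. qm p i) = (\<Sum>i<N. measure_pmf.expectation p (indicator {S. i \<in> S} :: nat set \<Rightarrow> real))"
    by (simp add: qm_def)
  also have "\<dots> = measure_pmf.expectation p (\<lambda>S. \<Sum>i<N. indicator {S. i \<in> S} S :: real)"
    by (rule Bochner_Integration.integral_sum[symmetric]) (rule int)
  also have "\<dots> = measure_pmf.expectation p (\<lambda>S. real k)"
  proof (rule integral_cong_AE)
    show "AE S in measure_pmf p. (\<Sum>i<N. indicator {S. i \<in> S} S :: real) = real k"
    proof (rule AE_pmfI)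
      fix S assume "S \<in> set_pmf p"
      hence S: "S \<subseteq> {..<N}" "card S = k" using assms by (auto simp: bs_strategy_def)
      have "(\<Sum>i<N. indicator {S. i \<in> S} S :: real) = (\<Sum>i<N. if i \<in> S then 1 else 0)"
        by (intro sum.cong) (auto simp: indicator_def)
      also have "\<dots> = real (card ({..<N} \<inter> S))"
        by (simp add: sum.If_cases)
      also have "{..<N} \<inter> S = S" using S by auto
      finally show "(\<Sum>i<N. indicator {S. i \<in> S} S :: real) = real k" using S by simp
    qed
  qed auto
  also have "\<dots> = real k" by simp
  finally show ?thesis .
qed

lemma qm_range: "0 \<le> qm p i" "qm p i \<le> 1"
  by (auto simp: qm_def)

definition KS :: "nat \<Rightarrow> nat \<Rightarrow> nat set set" where
  "KS N k = {S. S \<subseteq> {..<N} \<and> card S = k}"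

lemma KS_finite: "finite (KS N k)"
  unfolding KS_def by (rule finite_subset[of _ "Pow {..<N}"]) auto

lemma card_KS: "card (KS N k) = N choose k"
  unfolding KS_def using n_subsets[of "{..<N}" k] by simp

lemma KS_ne: "k \<le> N \<Longrightarrow> KS N k \<noteq> {}"
  using card_KS[of N k] by auto

lemma card_with:
  assumes "finite A" "l \<in> A" "1 \<le> k"
  shows "card {S. S \<subseteq> A \<and> card S = k \<and> l \<in> S} = (card A - 1) choose (k - 1)"
proof -
  have "bij_betw (\<lambda>S. S - {l}) {S. S \<subseteq> A \<and> card S = k \<and> l \<in> S} {S. S \<subseteq> A - {l} \<and> card S = k - 1}"
  proof (rule bij_betw_byWitness[where f'="insert l"])
    show "\<forall>S\<in>{S. S \<subseteq> A \<and> card S = k \<and> l \<in> S}. insert l (S - {l}) = S" by auto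
    show "\<forall>S\<in>{S. S \<subseteq> A - {l} \<and> card S = k - 1}. insert l S - {l} = S" by auto
    show "(\<lambda>S. S - {l}) ` {S. S \<subseteq> A \<and> card S = k \<and> l \<in> S} \<subseteq> {S. S \<subseteq> A - {l} \<and> card S = k - 1}"
    proof
      fix S' assume "S' \<in> (\<lambda>S. S - {l}) ` {S. S \<subseteq> A \<and> card S = k \<and> l \<in> S}"
      then obtain S where S: "S \<subseteq> A" "card S = k" "l \<in> S" "S' = S - {l}" by blast
      have "finite S" using S(1) assms(1) finite_subset by blast
      hence "card S' = k - 1" using S by simp
      thus "S' \<in> {S. S \<subseteq> A - {l} \<and> card S = k - 1}" using S by blast
    qed
    show "insert l ` {S. S \<subseteq> A - {l} \<and> card S = k - 1} \<subseteq> {S. S \<subseteq> A \<and> card S = k \<and> l \<in> S}"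
    proof
      fix S' assume "S' \<in> insert l ` {S. S \<subseteq> A - {l} \<and> card S = k - 1}"
      then obtain S where S: "S \<subseteq> A - {l}" "card S = k - 1" "S' = insert l S" by auto
      have "finite S" using S assms finite_subset by blast
      hence "card S' = k" using S assms by (auto simp: card_insert_if)
      thus "S' \<in> {S. S \<subseteq> A \<and> card S = k \<and> l \<in> S}" using S assms by auto
    qed
  qed
  hence "card {S. S \<subseteq> A \<and> card S = k \<and> l \<in> S} = card {S. S \<subseteq> A - {l} \<and> card S = k - 1}"
    by (rule bij_betw_same_card)
  also have "\<dots> = card (A - {l}) choose (k - 1)" using assms(1) by (intro n_subsets) auto
  also have "card (A - {l}) = card A - 1" using assms(2) by (rule card_Diff_singleton)
  finally show ?thesis .
qed

lemma card_with_without: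
  assumes "finite A" "l \<in> A" "j \<in> A" "l \<noteq> j" "1 \<le> k"
  shows "card {S. S \<subseteq> A \<and> card S = k \<and> l \<in> S \<and> j \<notin> S} = (card A - 2) choose (k - 1)"
proof -
  have "{S. S \<subseteq> A \<and> card S = k \<and> l \<in> S \<and> j \<notin> S} = {S. S \<subseteq> A - {j} \<and> card S = k \<and> l \<in> S}"
    by auto
  also have "card \<dots> = (card (A - {j}) - 1) choose (k - 1)"
    using assms by (intro card_with) auto
  also have "card (A - {j}) = card A - 1" using assms(3) by (rule card_Diff_singleton)
  also have "card A - 1 - 1 = card A - 2" by simp
  finally show ?thesis .
qed



definition UU :: "nat \<Rightarrow> nat \<Rightarrow> nat set pmf" where
  "UU N k = pmf_of_set (KS N k)"

lemma set_UU: "k \<le> N \<Longrightarrow> set_pmf (UU N k) = KS N k"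
  unfolding UU_def using KS_finite KS_ne by simp

lemma bs_UU: "k \<le> N \<Longrightarrow> bs_strategy N k (UU N k)"
  by (simp add: bs_strategy_def set_UU KS_def)

lemma prob_UU: "k \<le> N \<Longrightarrow> measure_pmf.prob (UU N k) E = card (KS N k \<inter> E) / (N choose k)"
  unfolding UU_def using KS_finite KS_ne by (simp add: measure_pmf_of_set card_KS)

lemma qm_UU:
  assumes "1 \<le> k" "k \<le> N" "i < N"
  shows "qm (UU N k) i = real k / real N"
proof -
  have "KS N k \<inter> {S. i \<in> S} = {S. S \<subseteq> {..<N} \<and> card S = k \<and> i \<in> S}" by (auto simp: KS_def)
  hence c: "card (KS N k \<inter> {S. i \<in> S}) = (N - 1) choose (k - 1)"
    using card_with[of "{..<N}" i k] assms by simp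
  have pos: "(N choose k) > 0" using assms by simp
  have eq: "k * (N choose k) = N * ((N - 1) choose (k - 1))" using assms by (intro times_binomial_minus1_eq) auto
  hence eqr: "real k * real (N choose k) = real N * real ((N - 1) choose (k - 1))" by (metis of_nat_mult)
  have "qm (UU N k) i = real ((N - 1) choose (k - 1)) / real (N choose k)"
    unfolding qm_def using assms by (simp add: prob_UU c)
  also have "\<dots> = real k / real N" using pos assms eqr by (simp add: field_simps)
  finally show ?thesis .
qed

definition aa :: "nat \<Rightarrow> nat \<Rightarrow> real" where
  "aa N k = real ((N - 2) choose (k - 1)) / real (N choose k)"

lemma aa_pos: "1 \<le> k \<Longrightarrow> k < N \<Longrightarrow> aa N k > 0"
  unfolding aa_def by simp

lemma prob_lj:
  assumes "1 \<le> k" "k \<le> N" "l < N" "j < N" "l \<noteq> j"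
  shows "measure_pmf.prob (UU N k) {S. l \<in> S \<and> j \<notin> S} = aa N k"
proof -
  have "KS N k \<inter> {S. l \<in> S \<and> j \<notin> S} = {S. S \<subseteq> {..<N} \<and> card S = k \<and> l \<in> S \<and> j \<notin> S}" by (auto simp: KS_def)
  hence c: "card (KS N k \<inter> {S. l \<in> S \<and> j \<notin> S}) = (N - 2) choose (k - 1)"
    using card_with_without[of "{..<N}" l j k] assms by simp
  show ?thesis using assms by (simp add: prob_UU c aa_def)
qed

definition sw :: "nat \<Rightarrow> nat \<Rightarrow> nat set \<Rightarrow> nat set" where
  "sw l j S = (if l \<in> S \<and> j \<notin> S then insert j (S - {l}) else S)"

definition mix :: "real \<Rightarrow> nat \<Rightarrow> nat \<Rightarrow> nat \<Rightarrow> nat \<Rightarrow> nat set pmf" where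
  "mix w l j N k = bind_pmf (bernoulli_pmf w) (\<lambda>b. if b then map_pmf (sw l j) (UU N k) else UU N k)"

lemma prob_mix:
  assumes "0 \<le> w" "w \<le> 1"
  shows "measure_pmf.prob (bind_pmf (bernoulli_pmf w) (\<lambda>b. if b then P else Q)) E
     = w * measure_pmf.prob P E + (1 - w) * measure_pmf.prob Q E"
proof -
  have "ennreal (measure_pmf.prob (bind_pmf (bernoulli_pmf w) (\<lambda>b. if b then P else Q)) E)
     = emeasure (measure_pmf (bind_pmf (bernoulli_pmf w) (\<lambda>b. if b then P else Q))) E"
    by (simp add: measure_pmf.emeasure_eq_measure)
  also have "\<dots> = emeasure (measure_pmf P) E * ennreal w + emeasure (measure_pmf Q) E * ennreal (1 - w)"
    using assms by simp
  also have "\<dots> = ennreal (w * measure_pmf.prob P E + (1 - w) * measure_pmf.prob Q E)"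
    using assms by (simp add: measure_pmf.emeasure_eq_measure ennreal_mult'' ennreal_plus[symmetric] mult.commute)
  finally show ?thesis by (subst (asm) ennreal_inj) (use assms in auto)
qed

lemma bs_mix:
  assumes "0 \<le> w" "w \<le> 1" "k \<le> N" "j < N"
  shows "bs_strategy N k (mix w l j N k)"
proof -
  have "set_pmf (map_pmf (sw l j) (UU N k)) \<subseteq> KS N k"
  proof
    fix S' assume "S' \<in> set_pmf (map_pmf (sw l j) (UU N k))"
    then obtain S where S: "S \<in> KS N k" "S' = sw l j S" using assms set_UU by auto
    have fS: "finite S" using S by (auto simp: KS_def intro: finite_subset)
    show "S' \<in> KS N k"
    proof (cases "l \<in> S \<and> j \<notin> S")
      case True
      have "card S > 0" using fS True card_gt_0_iff by blast
      hence "card S' = card S" using S fS True by (simp add: sw_def card_insert_if)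
      moreover have "S' \<subseteq> {..<N}" using S True assms by (auto simp: sw_def KS_def)
      ultimately show ?thesis using S by (auto simp: KS_def)
    next
      case False
      have "S' = S" unfolding S(2) sw_def using False by (rule if_not_P)
      thus ?thesis using S by simp
    qed
  qed
  hence "set_pmf (mix w l j N k) \<subseteq> KS N k"
    unfolding mix_def using assms set_UU[of k N] by (auto simp: image_subset_iff split: if_splits)
  moreover have KS: "{S. S \<subseteq> {..<N} \<and> card S = k} = KS N k" by (simp add: KS_def)
  ultimately show ?thesis unfolding bs_strategy_def KS by simp
qed

lemma qm_mix:
  assumes "0 \<le> w" "w \<le> 1" "1 \<le> k" "k \<le> N" "l < N" "j < N" "l \<noteq> j" "i < N"
  shows "qm (mix w l j N k) i = real k / real N + (if i = j then w * aa N k else if i = l then - w * aa N k else 0)"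
proof -
  have pm: "qm (mix w l j N k) i = w * measure_pmf.prob (UU N k) {S. i \<in> sw l j S} + (1 - w) * qm (UU N k) i"
    unfolding qm_def mix_def using assms by (subst prob_mix) (auto simp: vimage_def)
  have q: "qm (UU N k) i = real k / real N" using assms by (intro qm_UU) auto
  have a: "measure_pmf.prob (UU N k) {S. l \<in> S \<and> j \<notin> S} = aa N k" using assms by (intro prob_lj) auto
  show ?thesis
  proof (cases "i = j")
    case True
    have "{S. i \<in> sw l j S} = {S. j \<in> S} \<union> {S. l \<in> S \<and> j \<notin> S}" using True assms by (auto simp: sw_def)
    hence "measure_pmf.prob (UU N k) {S. i \<in> sw l j S} = measure_pmf.prob (UU N k) ({S. j \<in> S} \<union> {S. l \<in> S \<and> j \<notin> S})"
      by simp
    also have "\<dots> = measure_pmf.prob (UU N k) {S. j \<in> S} + measure_pmf.prob (UU N k) {S. l \<in> S \<and> j \<notin> S}"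
      by (rule measure_pmf.finite_measure_Union) auto
    finally have "measure_pmf.prob (UU N k) {S. i \<in> sw l j S} = qm (UU N k) j + aa N k"
      unfolding qm_def by (simp add: a)
    moreover have "real N > 0" using assms by simp
    ultimately show ?thesis using pm q True assms qm_UU[of k N j] by (simp add: field_simps)
  next
    case False
    show ?thesis
    proof (cases "i = l")
      case True
      have "{S. i \<in> sw l j S} = {S. l \<in> S} - {S. l \<in> S \<and> j \<notin> S}" using True assms by (auto simp: sw_def)
      hence "measure_pmf.prob (UU N k) {S. i \<in> sw l j S} = measure_pmf.prob (UU N k) ({S. l \<in> S} - {S. l \<in> S \<and> j \<notin> S})"
        by simp
      also have "\<dots> = measure_pmf.prob (UU N k) {S. l \<in> S} - measure_pmf.prob (UU N k) {S. l \<in> S \<and> j \<notin> S}"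
        by (rule measure_pmf.finite_measure_Diff) auto
      finally have "measure_pmf.prob (UU N k) {S. i \<in> sw l j S} = qm (UU N k) l - aa N k"
        unfolding qm_def by (simp add: a)
      hence "qm (mix w l j N k) i = w * (real k / real N - aa N k) + (1 - w) * (real k / real N)"
        using pm q True assms qm_UU[of k N l] by simp
      moreover have "w * (real k / real N - aa N k) + (1 - w) * (real k / real N) = real k / real N - w * aa N k"
        by (simp add: algebra_simps add_divide_distrib[symmetric])
      ultimately show ?thesis using True \<open>i \<noteq> j\<close> by simp
    next
      case False
      have "{S. i \<in> sw l j S} = {S. i \<in> S}" using False \<open>i \<noteq> j\<close> by (auto simp: sw_def)
      moreover have "real N > 0" using assms by simp
      ultimately show ?thesis using pm q False \<open>i \<noteq> j\<close> by (simp add: qm_def field_simps)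
    qed
  qed
qed



definition cnt :: "(nat \<Rightarrow> bool) \<Rightarrow> nat \<Rightarrow> nat \<Rightarrow> nat" where
  "cnt \<rho> a t = card {s\<in>{a..<t}. \<rho> s}"

lemma prod_pow: "(\<Prod>s\<in>{a..<t}. (if \<rho> s then y else 1)) = y ^ cnt \<rho> a t"
proof -
  have "(\<Prod>s\<in>{a..<t}. (if \<rho> s then y else 1)) = (\<Prod>s\<in>{s\<in>{a..<t}. \<rho> s}. y)"
    by (subst prod.inter_filter[symmetric]) auto
  thus ?thesis by (simp add: cnt_def)
qed

lemma ee_pow: "ee x \<rho> t = 1 + (\<Sum>a\<in>{1..<t}. (1 - x) ^ cnt \<rho> a t)"
  unfolding ee_def by (simp add: prod_pow)

lemma tangent:
  fixes y z :: real
  assumes "0 \<le> y" "0 \<le> z"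
  shows "z ^ n + real n * z ^ (n - 1) * (y - z) \<le> y ^ n"
proof (induction n)
  case 0 thus ?case by simp
next
  case (Suc n)
  show ?case
  proof (cases n)
    case 0 thus ?thesis by simp
  next
    case (Suc m)
    have "y ^ Suc n = y * y ^ n" by simp
    also have "\<dots> \<ge> y * (z ^ n + real n * z ^ (n - 1) * (y - z))"
      using Suc.IH assms by (intro mult_left_mono) auto
    finally have h: "y * (z ^ n + real n * z ^ (n - 1) * (y - z)) \<le> y ^ Suc n" .
    have zn: "z ^ n = z * z ^ (n - 1)" unfolding Suc by simp
    have "y * (z ^ n + real n * z ^ (n - 1) * (y - z)) - (z ^ Suc n + real (Suc n) * z ^ n * (y - z))
        = real n * z ^ (n - 1) * (y - z)^2"
      unfolding Suc by (simp add: algebra_simps power2_eq_square)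
    moreover have "real n * z ^ (n - 1) * (y - z)^2 \<ge> 0" using assms by simp
    ultimately show ?thesis using h by (simp add: Suc)
  qed
qed

lemma jensen_pow:
  fixes q :: "nat \<Rightarrow> real"
  assumes "finite I" "\<forall>i\<in>I. q i \<le> 1" "x0 \<le> 1" "(\<Sum>i\<in>I. q i) = real (card I) * x0"
  shows "real (card I) * (1 - x0) ^ n \<le> (\<Sum>i\<in>I. (1 - q i) ^ n)"
proof -
  have "(\<Sum>i\<in>I. (1 - x0) ^ n + real n * (1 - x0) ^ (n - 1) * ((1 - q i) - (1 - x0))) \<le> (\<Sum>i\<in>I. (1 - q i) ^ n)"
    using assms by (intro sum_mono tangent) auto
  moreover have "(\<Sum>i\<in>I. (1 - x0) ^ n + real n * (1 - x0) ^ (n - 1) * ((1 - q i) - (1 - x0)))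
      = real (card I) * (1 - x0) ^ n + real n * (1 - x0) ^ (n - 1) * (real (card I) * x0 - (\<Sum>i\<in>I. q i))"
    by (simp add: sum.distrib sum_distrib_left[symmetric] sum_distrib_right sum_subtractf algebra_simps)
  ultimately show ?thesis using assms by simp
qed

lemma FF_diff:
  fixes q :: "nat \<Rightarrow> real"
  assumes "finite I"
  shows "(\<Sum>i\<in>I. FF (q i) \<rho> T) - real (card I) * FF x0 \<rho> T =
     (\<Sum>t\<in>{1..T}. \<Sum>a\<in>{1..<t}. ((\<Sum>i\<in>I. (1 - q i) ^ cnt \<rho> a t) - real (card I) * (1 - x0) ^ cnt \<rho> a t))"
proof -
  have "(\<Sum>i\<in>I. FF (q i) \<rho> T) = (\<Sum>t\<in>{1..T}. \<Sum>i\<in>I. (1 + (\<Sum>a\<in>{1..<t}. (1 - q i) ^ cnt \<rho> a t)))"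
    unfolding FF_def ee_pow by (rule sum.swap)
  also have "\<dots> = (\<Sum>t\<in>{1..T}. real (card I) + (\<Sum>a\<in>{1..<t}. \<Sum>i\<in>I. (1 - q i) ^ cnt \<rho> a t))"
    by (simp add: sum.distrib sum.swap[of _ I])
  finally have 1: "(\<Sum>i\<in>I. FF (q i) \<rho> T) = \<dots>" .
  have 2: "real (card I) * FF x0 \<rho> T = (\<Sum>t\<in>{1..T}. real (card I) + (\<Sum>a\<in>{1..<t}. real (card I) * (1 - x0) ^ cnt \<rho> a t))"
    unfolding FF_def ee_pow by (simp add: sum_distrib_left algebra_simps)
  show ?thesis unfolding 1 2 by (simp add: sum_subtractf[symmetric])
qed

lemma FF_jensen:
  fixes q :: "nat \<Rightarrow> real"
  assumes "finite I" "\<forall>i\<in>I. q i \<le> 1" "x0 \<le> 1" "(\<Sum>i\<in>I. q i) = real (card I) * x0"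
  shows "real (card I) * FF x0 \<rho> T \<le> (\<Sum>i\<in>I. FF (q i) \<rho> T)"
proof -
  have "0 \<le> (\<Sum>t\<in>{1..T}. \<Sum>a\<in>{1..<t}. ((\<Sum>i\<in>I. (1 - q i) ^ cnt \<rho> a t) - real (card I) * (1 - x0) ^ cnt \<rho> a t))"
    using jensen_pow[OF assms] by (intro sum_nonneg) auto
  thus ?thesis using FF_diff[OF assms(1), of q \<rho> T x0] by linarith
qed

lemma FF_jensen_eq:
  fixes q :: "nat \<Rightarrow> real"
  assumes "finite I" "\<forall>i\<in>I. q i \<le> 1" "x0 \<le> 1" "(\<Sum>i\<in>I. q i) = real (card I) * x0"
    and eq: "(\<Sum>i\<in>I. FF (q i) \<rho> T) \<le> real (card I) * FF x0 \<rho> T"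
    and w: "1 \<le> a" "a < t" "t \<le> T" "cnt \<rho> a t = 2"
  shows "\<forall>i\<in>I. q i = x0"
proof -
  define D where "D t a = (\<Sum>i\<in>I. (1 - q i) ^ cnt \<rho> a t) - real (card I) * (1 - x0) ^ cnt \<rho> a t" for t a
  have nn: "0 \<le> D t a" for t a unfolding D_def using jensen_pow[OF assms(1-4)] by simp
  have s0: "(\<Sum>t\<in>{1..T}. \<Sum>a\<in>{1..<t}. D t a) = 0"
  proof -
    have "(\<Sum>t\<in>{1..T}. \<Sum>a\<in>{1..<t}. D t a) \<le> 0" using FF_diff[OF assms(1), of q \<rho> T x0] eq unfolding D_def by simp
    moreover have "0 \<le> (\<Sum>t\<in>{1..T}. \<Sum>a\<in>{1..<t}. D t a)" using nn by (intro sum_nonneg) auto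
    ultimately show ?thesis by simp
  qed
  have "(\<Sum>a\<in>{1..<t}. D t a) = 0"
    using s0 nn w by (subst (asm) sum_nonneg_eq_0_iff) (auto intro: sum_nonneg)
  hence D0: "D t a = 0"
    using nn w by (subst (asm) sum_nonneg_eq_0_iff) auto
  have "D t a = (\<Sum>i\<in>I. (q i - x0)^2)"
  proof -
    have "D t a = (\<Sum>i\<in>I. (1 - q i)^2) - real (card I) * (1 - x0)^2" unfolding D_def using w by simp
    also have "\<dots> = (\<Sum>i\<in>I. (q i)^2) - real (card I) * x0^2 + (2 * (real (card I) * x0) - 2 * (\<Sum>i\<in>I. q i))"
      by (simp add: power2_diff sum.distrib sum_subtractf sum_distrib_left[symmetric] sum_distrib_right algebra_simps)
    also have "\<dots> = (\<Sum>i\<in>I. (q i)^2) - real (card I) * x0^2" using assms(4) by simp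
    also have "(\<Sum>i\<in>I. (q i - x0)^2) = (\<Sum>i\<in>I. (q i)^2) - 2 * x0 * (\<Sum>i\<in>I. q i) + real (card I) * x0^2"
      by (simp add: power2_diff sum.distrib sum_subtractf sum_distrib_left sum_distrib_right algebra_simps)
    ultimately show ?thesis using assms(4) by (simp add: power2_eq_square algebra_simps)
  qed
  hence "(\<Sum>i\<in>I. (q i - x0)^2) = 0" using D0 by simp
  hence "\<forall>i\<in>I. (q i - x0)^2 = 0" using assms(1) by (subst (asm) sum_nonneg_eq_0_iff) auto
  thus ?thesis by simp
qed

lemma cnt_Suc_le: "cnt \<rho> 1 (Suc t) \<le> cnt \<rho> 1 t + 1"
proof -
  have "{s\<in>{1..<Suc t}. \<rho> s} \<subseteq> insert t {s\<in>{1..<t}. \<rho> s}" by auto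
  hence "card {s\<in>{1..<Suc t}. \<rho> s} \<le> card (insert t {s\<in>{1..<t}. \<rho> s})" by (intro card_mono) auto
  also have "\<dots> \<le> card {s\<in>{1..<t}. \<rho> s} + 1" by (simp add: card_insert_if)
  finally show ?thesis by (simp add: cnt_def)
qed

lemma cnt_ivt: "m \<le> cnt \<rho> 1 t \<Longrightarrow> \<exists>t'\<le>t. cnt \<rho> 1 t' = m"
proof (induction t arbitrary: m)
  case 0 thus ?case by (auto simp: cnt_def)
next
  case (Suc t)
  show ?case
  proof (cases "m \<le> cnt \<rho> 1 t")
    case True thus ?thesis using Suc.IH by (meson le_Suc_eq)
  next
    case False
    hence "m = cnt \<rho> 1 (Suc t)" using Suc.prems cnt_Suc_le[of \<rho> t] by linarith
    thus ?thesis by auto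
  qed
qed

lemma cnt_le: "cnt \<rho> 1 t \<le> t - 1"
proof -
  have "cnt \<rho> 1 t \<le> card {1..<t}" unfolding cnt_def by (intro card_mono) auto
  thus ?thesis by simp
qed

lemma window2:
  assumes "2 \<le> cnt \<rho> 1 T"
  shows "\<exists>t. 1 < t \<and> t \<le> T \<and> cnt \<rho> 1 t = 2"
proof -
  obtain t where t: "t \<le> T" "cnt \<rho> 1 t = 2" using cnt_ivt[OF assms] by blast
  have "1 < t" using cnt_le[of \<rho> t] t by linarith
  thus ?thesis using t by blast
qed



abbreviation clean :: "nat \<Rightarrow> bool" where "clean \<equiv> (\<lambda>_. True)"

definition yy :: "real \<Rightarrow> (nat \<Rightarrow> bool) \<Rightarrow> nat \<Rightarrow> real" where
  "yy x \<rho> t = ee x \<rho> t - ee x clean t"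

definition GG :: "real \<Rightarrow> (nat \<Rightarrow> bool) \<Rightarrow> nat \<Rightarrow> real" where
  "GG x \<rho> T = FF x \<rho> T - FF x clean T"

lemma GG_sum: "GG x \<rho> T = (\<Sum>t\<in>{1..T}. yy x \<rho> t)"
  unfolding GG_def FF_def yy_def by (simp add: sum_subtractf)

lemma ee_clean:
  assumes "0 < x" "1 \<le> t"
  shows "ee x clean t = (1 - (1 - x) ^ t) / x"
  using assms(2)
proof (induction t rule: nat_induct_at_least)
  case base thus ?case using assms(1) by simp
next
  case (Suc t)
  have "ee x clean (Suc t) = 1 + (1-x) * ((1 - (1-x)^t)/x)" using Suc by (simp add: ee_step)
  also have "\<dots> = (1 - (1-x)^Suc t)/x" using assms(1) by (simp add: field_simps)
  finally show ?case .
qed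

lemma yy_1[simp]: "yy x \<rho> (Suc 0) = 0" by (simp add: yy_def)

lemma yy_step:
  assumes "0 < x" "1 \<le> t"
  shows "yy x \<rho> (Suc t) = (if \<rho> t then (1 - x) * yy x \<rho> t else yy x \<rho> t + 1 - (1 - x) ^ t)"
proof -
  have c: "ee x clean t = (1 - (1 - x) ^ t) / x" using assms by (rule ee_clean)
  show ?thesis
    unfolding yy_def using assms
    by (simp add: ee_step c field_simps)
qed

definition bcnt :: "(nat \<Rightarrow> bool) \<Rightarrow> nat \<Rightarrow> nat" where
  "bcnt \<rho> t = card {s\<in>{1..<t}. \<not> \<rho> s}"

lemma bcnt_Suc: "1 \<le> t \<Longrightarrow> bcnt \<rho> (Suc t) = bcnt \<rho> t + (if \<rho> t then 0 else 1)"
proof -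
  assume t: "1 \<le> t"
  have "{s\<in>{1..<Suc t}. \<not> \<rho> s} = (if \<rho> t then {s\<in>{1..<t}. \<not> \<rho> s} else insert t {s\<in>{1..<t}. \<not> \<rho> s})"
    using t by (auto simp: less_Suc_eq)
  thus ?thesis unfolding bcnt_def by (simp add: card_insert_if)
qed

lemma ub_aux:
  assumes "0 < x" "x \<le> 1"
  shows "0 \<le> yy x \<rho> (Suc m) \<and> yy x \<rho> (Suc m) \<le> real (bcnt \<rho> (Suc m)) \<and>
    (\<Sum>s\<in>{1..Suc m}. yy x \<rho> s) + ((1 - x) / x) * yy x \<rho> (Suc m)
      \<le> real (bcnt \<rho> (Suc m)) * (real (bcnt \<rho> (Suc m)) + 1) / 2 + real (bcnt \<rho> (Suc m)) * ((1 - x) / x)"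
proof (induction m)
  case 0 thus ?case by (simp add: bcnt_def)
next
  case (Suc m)
  define y where "y = yy x \<rho> (Suc m)"
  define b where "b = real (bcnt \<rho> (Suc m))"
  define S where "S = (\<Sum>s\<in>{1..Suc m}. yy x \<rho> s)"
  define c where "c = 1 - x"
  have c01: "0 \<le> c" "c < 1" using assms by (auto simp: c_def)
  have IH: "0 \<le> y" "y \<le> b" "S + (c / x) * y \<le> b * (b + 1) / 2 + b * (c / x)"
    using Suc.IH by (auto simp: y_def b_def S_def c_def)
  have ys: "yy x \<rho> (Suc (Suc m)) = (if \<rho> (Suc m) then c * y else y + 1 - c ^ Suc m)"
    using yy_step[OF assms(1), of "Suc m" \<rho>] by (simp add: y_def c_def)
  have bs: "real (bcnt \<rho> (Suc (Suc m))) = b + (if \<rho> (Suc m) then 0 else 1)"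
    using bcnt_Suc[of "Suc m" \<rho>] by (simp add: b_def)
  have Ss: "(\<Sum>s\<in>{1..Suc (Suc m)}. yy x \<rho> s) = S + yy x \<rho> (Suc (Suc m))"
    by (simp add: S_def)
  have cx: "c / x = (1 - x) / x" by (simp add: c_def)
  have cpow: "0 \<le> c ^ Suc m" "c ^ Suc m \<le> 1" using c01 by (simp, intro power_le_one, auto)
  show ?case
  proof (cases "\<rho> (Suc m)")
    case True
    have key: "S + c * y + (c / x) * (c * y) = S + (c / x) * y"
      using assms by (simp add: c_def field_simps)
    have "0 \<le> c * y" using IH c01 by simp
    have "c * y \<le> b" using IH c01 by (metis mult_left_le_one_le less_imp_le order_trans)
    have "S + c*y + (c/x)*(c*y) \<le> b*(b+1)/2 + b*(c/x)" using key IH(3) by linarith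
    thus ?thesis unfolding Ss ys bs cx[symmetric] using \<open>0 \<le> c * y\<close> \<open>c * y \<le> b\<close> True by simp
  next
    case False
    have step: "S + (y + 1 - c ^ Suc m) + (c / x) * (y + 1 - c ^ Suc m) \<le> S + (c / x) * y + (b + 1 + c / x)"
    proof -
      have "(y + 1 - c ^ Suc m) + (c / x) * (y + 1 - c ^ Suc m) = (c / x) * y + y + (1 - c ^ Suc m) * (1 + c / x)"
        by (simp add: algebra_simps add_divide_distrib)
      moreover have "(1 - c ^ Suc m) * (1 + c / x) \<le> 1 + c / x"
        using cpow c01 assms by (intro mult_left_le_one_le) auto
      ultimately show ?thesis using IH by linarith
    qed
    have gen: "\<And>S y b k::real. S + k*y \<le> b*(b+1)/2 + b*k \<Longrightarrow> S + k*y + (b+1+k) \<le> (b+1)*(b+1+1)/2 + (b+1)*k"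
      by (simp add: field_simps)
    have "S + (c / x) * y + (b + 1 + c / x) \<le> (b + 1) * (b + 1 + 1) / 2 + (b + 1) * (c / x)"
      using gen[OF IH(3)] .
    hence A: "S + (y + 1 - c ^ Suc m) + (c / x) * (y + 1 - c ^ Suc m) \<le> (b + 1) * (b + 1 + 1) / 2 + (b + 1) * (c / x)"
      using step by linarith
    have "0 \<le> y + 1 - c ^ Suc m" "y + 1 - c ^ Suc m \<le> b + 1" using IH cpow by auto
    thus ?thesis unfolding Ss ys bs cx[symmetric] using A False by simp
  qed
qed

lemma yy_nonneg: "0 < x \<Longrightarrow> x \<le> 1 \<Longrightarrow> 0 \<le> yy x \<rho> t"
  using ub_aux[of x \<rho> "t - 1"] by (cases t) (auto simp: yy_def ee_def)

lemma GG_nonneg: "0 < x \<Longrightarrow> x \<le> 1 \<Longrightarrow> 0 \<le> GG x \<rho> T"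
  unfolding GG_sum by (intro sum_nonneg yy_nonneg) auto

lemma GG_ub:
  assumes "0 < x" "x \<le> 1" "1 \<le> T"
  shows "GG x \<rho> T \<le> real (bcnt \<rho> T) * (real (bcnt \<rho> T) + 1) / 2 + real (bcnt \<rho> T) * ((1 - x) / x)"
proof -
  obtain m where T: "T = Suc m" using assms by (cases T) auto
  have "0 \<le> ((1 - x) / x) * yy x \<rho> T" using assms yy_nonneg[OF assms(1,2)] by simp
  thus ?thesis using ub_aux[OF assms(1,2), of \<rho> m] unfolding GG_sum T by linarith
qed

lemma GG_clean:
  assumes "0 < x" "x \<le> 1" "1 \<le> T" "\<forall>s\<in>{1..<T}. \<rho> s"
  shows "GG x \<rho> T = 0"
proof -
  have "bcnt \<rho> T = 0" using assms(4) by (auto simp: bcnt_def)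
  thus ?thesis using GG_ub[OF assms(1-3), of \<rho>] GG_nonneg[OF assms(1,2), of \<rho> T] by simp
qed



definition runp :: "nat \<Rightarrow> nat \<Rightarrow> nat \<Rightarrow> bool" where
  "runp M B s = (\<not> (M \<le> s \<and> s < M + B))"

lemma sum_id_real: "(\<Sum>m\<in>{0..B}. real m) = real B * (real B + 1) / 2"
  by (induction B) (auto simp: field_simps)

lemma geo_sum:
  fixes c :: real
  assumes "c < 1"
  shows "(\<Sum>j\<in>{1..J}. c ^ j) = c * (1 - c ^ J) / (1 - c)"
proof (induction J)
  case 0 thus ?case by simp
next
  case (Suc J)
  have "(\<Sum>j\<in>{1..Suc J}. c ^ j) = (\<Sum>j\<in>{1..J}. c ^ j) + c ^ Suc J" by simp
  also have "\<dots> = c * (1 - c ^ J) / (1 - c) + c ^ Suc J" using Suc by simp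
  also have "\<dots> = c * (1 - c ^ Suc J) / (1 - c)" using assms by (simp add: field_simps)
  finally show ?case .
qed

context
  fixes x :: real and M B :: nat
  assumes x: "0 < x" "x < 1" and M: "1 \<le> M"
begin

lemma run_pre: "1 \<le> t \<Longrightarrow> t \<le> M \<Longrightarrow> yy x (runp M B) t = 0"
proof (induction t rule: nat_induct_at_least)
  case base thus ?case by simp
next
  case (Suc t)
  have "runp M B t" using Suc by (simp add: runp_def)
  thus ?case using Suc yy_step[of x t "runp M B"] x by simp
qed

lemma run_mid: "m \<le> B \<Longrightarrow> yy x (runp M B) (M + m) = real m - (1 - x) ^ M * (1 - (1 - x) ^ m) / x"
proof (induction m)
  case 0 thus ?case using run_pre[of M] M by simp
next
  case (Suc m)
  have nr: "\<not> runp M B (M + m)" using Suc by (simp add: runp_def)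
  have "yy x (runp M B) (Suc (M + m)) = yy x (runp M B) (M + m) + 1 - (1 - x) ^ (M + m)"
    using yy_step[of x "M + m" "runp M B"] x M nr by simp
  also have "\<dots> = real (Suc m) - (1 - x) ^ M * (1 - (1 - x) ^ Suc m) / x"
    using Suc x by (simp add: field_simps power_add)
  finally show ?case by simp
qed

lemma run_post: "yy x (runp M B) (M + B + j) = (1 - x) ^ j * yy x (runp M B) (M + B)"
proof (induction j)
  case 0 thus ?case by simp
next
  case (Suc j)
  have r: "runp M B (M + B + j)" by (simp add: runp_def)
  have "yy x (runp M B) (Suc (M + B + j)) = (1 - x) * yy x (runp M B) (M + B + j)"
    using yy_step[of x "M + B + j" "runp M B"] x M r by simp
  thus ?case using Suc by simp
qed

lemma run_lb:
  assumes T: "M + B \<le> T"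
  shows "GG x (runp M B) T \<ge> real B * (real B + 1) / 2 + real B * ((1 - x) / x)
     - (real (B + 1) * (1 - x) ^ M / x + real B * (1 - x) ^ (T - M - B) / x + (1 - x) ^ M / x ^ 2)"
proof -
  define c where "c = 1 - x"
  define J where "J = T - M - B"
  define Y where "Y = yy x (runp M B) (M + B)"
  have c01: "0 < c" "c < 1" using x by (auto simp: c_def)
  have cM: "0 \<le> c ^ M" "c ^ M \<le> 1" using c01 by (auto intro: power_le_one)
  have cJ: "0 \<le> c ^ J" "c ^ J \<le> 1" using c01 by (auto intro: power_le_one)
  have nn: "0 \<le> yy x (runp M B) t" for t using yy_nonneg x by simp
  have sub: "{M..M+B} \<union> {M+B+1..T} \<subseteq> {1..T}" using M T by auto
  have "(\<Sum>t\<in>{M..M+B} \<union> {M+B+1..T}. yy x (runp M B) t) \<le> (\<Sum>t\<in>{1..T}. yy x (runp M B) t)"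
    by (rule sum_mono2) (use sub nn in auto)
  moreover have "(\<Sum>t\<in>{M..M+B} \<union> {M+B+1..T}. yy x (runp M B) t) =
      (\<Sum>t\<in>{M..M+B}. yy x (runp M B) t) + (\<Sum>t\<in>{M+B+1..T}. yy x (runp M B) t)"
    by (rule sum.union_disjoint) auto
  ultimately have G1: "GG x (runp M B) T \<ge> (\<Sum>t\<in>{M..M+B}. yy x (runp M B) t) + (\<Sum>t\<in>{M+B+1..T}. yy x (runp M B) t)"
    unfolding GG_sum by simp
  have "(\<Sum>t\<in>{M..M+B}. yy x (runp M B) t) = (\<Sum>m\<in>{0..B}. yy x (runp M B) (m + M))"
    using sum.shift_bounds_cl_nat_ivl[of "yy x (runp M B)" 0 M B] by (simp add: add.commute)
  also have "\<dots> = (\<Sum>m\<in>{0..B}. real m - c ^ M * (1 - c ^ m) / x)"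
  proof (rule sum.cong)
    fix m assume "m \<in> {0..B}"
    thus "yy x (runp M B) (m + M) = real m - c ^ M * (1 - c ^ m) / x"
      using run_mid[of m] by (simp add: add.commute c_def)
  qed simp
  also have "\<dots> \<ge> (\<Sum>m\<in>{0..B}. real m - c ^ M / x)"
  proof (intro sum_mono)
    fix m
    have "c ^ M * (1 - c ^ m) \<le> c ^ M" using cM c01 by (simp add: mult_left_le_one_le mult.commute)
    thus "real m - c ^ M / x \<le> real m - c ^ M * (1 - c ^ m) / x" using x by (simp add: divide_right_mono)
  qed
  finally have S1: "(\<Sum>t\<in>{M..M+B}. yy x (runp M B) t) \<ge> real B * (real B + 1) / 2 - real (B + 1) * c ^ M / x"
    by (simp add: sum_subtractf sum_id_real)
  have "(\<Sum>t\<in>{M+B+1..T}. yy x (runp M B) t) = (\<Sum>j\<in>{1..J}. yy x (runp M B) (j + (M + B)))"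
    using sum.shift_bounds_cl_nat_ivl[of "yy x (runp M B)" 1 "M + B" J] T by (simp add: J_def add.commute)
  also have "\<dots> = (\<Sum>j\<in>{1..J}. c ^ j) * Y"
  proof -
    have "(\<Sum>j\<in>{1..J}. yy x (runp M B) (j + (M + B))) = (\<Sum>j\<in>{1..J}. c ^ j * Y)"
    proof (rule sum.cong)
      fix j assume "j \<in> {1..J}"
      show "yy x (runp M B) (j + (M + B)) = c ^ j * Y"
        using run_post[of j] by (simp add: add.commute Y_def c_def)
    qed simp
    thus ?thesis by (simp add: sum_distrib_right)
  qed
  also have "\<dots> = (c * (1 - c ^ J) / x) * Y" using geo_sum[of c J] c01 by (simp add: c_def)
  finally have S2eq: "(\<Sum>t\<in>{M+B+1..T}. yy x (runp M B) t) = (c * (1 - c ^ J) / x) * Y" .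
  have Yv: "Y = real B - c ^ M * (1 - c ^ B) / x" using run_mid[of B] by (simp add: Y_def c_def)
  have Ylb: "Y \<ge> real B - c ^ M / x"
  proof -
    have "c ^ M * (1 - c ^ B) \<le> c ^ M" using cM c01 by (simp add: mult_left_le_one_le mult.commute)
    thus ?thesis unfolding Yv using x by (simp add: divide_right_mono)
  qed
  have fac: "0 \<le> c * (1 - c ^ J) / x" using c01 cJ x by simp
  have "(c * (1 - c ^ J) / x) * Y \<ge> (c * (1 - c ^ J) / x) * (real B - c ^ M / x)"
    using Ylb fac by (rule mult_left_mono)
  moreover have "(c * (1 - c ^ J) / x) * (real B - c ^ M / x) \<ge> real B * (c / x) - real B * c ^ J / x - c ^ M / x ^ 2"
  proof -
    have e: "(c * (1 - c ^ J) / x) * (real B - c ^ M / x) = real B * (c / x) - real B * (c * c ^ J) / x - c * (1 - c ^ J) * c ^ M / x ^ 2"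
      using x by (simp add: field_simps power2_eq_square)
    have a1: "real B * (c * c ^ J) / x \<le> real B * c ^ J / x"
      using c01 cJ x by (intro divide_right_mono mult_left_mono) (auto simp: mult_left_le_one_le)
    have a2: "c * (1 - c ^ J) * c ^ M / x ^ 2 \<le> c ^ M / x ^ 2"
    proof -
      have "c * (1 - c ^ J) \<le> 1" using c01 cJ by (intro mult_le_one) auto
      hence "c ^ M * (c * (1 - c ^ J)) \<le> c ^ M" using cM c01 cJ by (intro mult_right_le_one_le) auto
      hence "c * (1 - c ^ J) * c ^ M \<le> c ^ M" by (simp add: mult.commute)
      thus ?thesis using x by (simp add: divide_right_mono)
    qed
    show ?thesis unfolding e using a1 a2 by linarith
  qed
  ultimately have S2: "(\<Sum>t\<in>{M+B+1..T}. yy x (runp M B) t) \<ge> real B * (c / x) - real B * c ^ J / x - c ^ M / x ^ 2"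
    unfolding S2eq by linarith
  show ?thesis using G1 S1 S2 unfolding c_def J_def by linarith
qed

end



lemma shift_inv:
  fixes N r i :: nat
  assumes "0 < N" "i < N"
  shows "((i + r) mod N + (N - r mod N)) mod N = i"
proof -
  have "((i + r) mod N + (N - r mod N)) mod N = (i + r + (N - r mod N)) mod N"
    by (simp add: mod_add_left_eq)
  also have "r + (N - r mod N) = N * (r div N + 1)"
  proof -
    have e: "N * (r div N) + r mod N = r" by (rule mult_div_mod_eq)
    have l: "r mod N < N" using assms(1) by simp
    have "N * (r div N + 1) = N * (r div N) + N" by simp
    thus ?thesis using e l by linarith
  qed
  hence "i + r + (N - r mod N) = i + N * (r div N + 1)" by simp
  also have "(i + N * (r div N + 1)) mod N = i" using assms by (simp only: mod_mult_self2 mod_less)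
  finally show ?thesis .
qed

lemma shift_bij:
  fixes N r :: nat
  assumes "0 < N"
  shows "bij_betw (\<lambda>i. (i + r) mod N) {..<N} {..<N}"
proof -
  have inj: "inj_on (\<lambda>i. (i + r) mod N) {..<N}"
    by (rule inj_on_inverseI[where g="\<lambda>j. (j + (N - r mod N)) mod N"]) (use shift_inv assms in auto)
  have sub: "(\<lambda>i. (i + r) mod N) ` {..<N} \<subseteq> {..<N}" using assms by auto
  have "(\<lambda>i. (i + r) mod N) ` {..<N} = {..<N}" by (rule endo_inj_surj) (use inj sub in auto)
  thus ?thesis using inj by (simp add: bij_betw_def)
qed

lemma shift_sum:
  fixes N r :: nat
  assumes "0 < N"
  shows "(\<Sum>i<N. f ((i + r) mod N)) = (\<Sum>i<N. (f i :: 'a::comm_monoid_add))"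
  by (rule sum.reindex_bij_betw[OF shift_bij[OF assms]])

lemma concentration:
  fixes b :: "nat \<Rightarrow> nat" and B :: nat and \<kappa> E :: real
  assumes "(\<Sum>i<N. b i) \<le> B" "0 \<le> \<kappa>" "E < real B / 2"
    and "(\<Sum>i<N. real (b i) * (real (b i) + 1) / 2 + real (b i) * \<kappa>) \<ge> real B * (real B + 1) / 2 + real B * \<kappa> - E"
  shows "\<exists>j<N. b j = B \<and> (\<forall>i<N. i \<noteq> j \<longrightarrow> b i = 0)"
proof (rule ccontr)
  assume H: "\<not> ?thesis"
  have Bpos: "B > 0"
  proof (rule ccontr)
    assume "\<not> B > 0"
    hence "\<forall>i<N. b i = 0" using assms(1) by (simp add: sum_eq_0_iff)
    hence "(\<Sum>i<N. real (b i) * (real (b i) + 1) / 2 + real (b i) * \<kappa>) = 0" by simp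
    thus False using assms(3,4) \<open>\<not> B > 0\<close> by simp
  qed
  have bi: "b i \<le> B" if "i < N" for i
    using that assms(1) member_le_sum[of i "{..<N}" b] by auto
  have lt: "b i \<le> B - 1" if "i < N" for i
  proof (rule ccontr)
    assume "\<not> b i \<le> B - 1"
    hence bB: "b i = B" using bi[OF that] by linarith
    have "\<forall>i'<N. i' \<noteq> i \<longrightarrow> b i' = 0"
    proof (intro allI impI)
      fix i' assume "i' < N" "i' \<noteq> i"
      have "b i + b i' = (\<Sum>x\<in>{i, i'}. b x)" using \<open>i' \<noteq> i\<close> by simp
      also have "\<dots> \<le> (\<Sum>x<N. b x)" by (rule sum_mono2) (use that \<open>i' < N\<close> in auto)
      finally show "b i' = 0" using assms(1) bB by linarith
    qed
    thus False using H bB that by blast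
  qed
  have "(\<Sum>i<N. real (b i) * (real (b i) + 1) / 2 + real (b i) * \<kappa>) \<le> (\<Sum>i<N. real B * real (b i) / 2 + real (b i) * \<kappa>)"
  proof (rule sum_mono)
    fix i assume "i \<in> {..<N}"
    hence "real (b i) + 1 \<le> real B" using lt[of i] bi[of i] Bpos by (cases B) auto
    hence "real (b i) * (real (b i) + 1) \<le> real (b i) * real B" by (intro mult_left_mono) auto
    thus "real (b i) * (real (b i) + 1) / 2 + real (b i) * \<kappa> \<le> real B * real (b i) / 2 + real (b i) * \<kappa>"
      by (simp add: mult.commute)
  qed
  also have "\<dots> = (real B / 2 + \<kappa>) * real (\<Sum>i<N. b i)"
    by (simp add: sum_distrib_left sum.distrib algebra_simps)
  also have "\<dots> \<le> (real B / 2 + \<kappa>) * real B"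
  proof (intro mult_left_mono)
    have "real (\<Sum>i<N. b i) \<le> real B" using assms(1) by linarith
    thus "real (\<Sum>i<N. b i) \<le> real B" .
  qed (use assms in auto)
  finally have "(\<Sum>i<N. real (b i) * (real (b i) + 1) / 2 + real (b i) * \<kappa>) \<le> (real B / 2 + \<kappa>) * real B" .
  moreover have "real B * (real B + 1) / 2 + real B * \<kappa> = (real B / 2 + \<kappa>) * real B + real B / 2"
    by (simp add: field_simps)
  ultimately show False using assms(3,4) by linarith
qed


lemma lin: "(P::real) - Q \<le> Y + V \<Longrightarrow> (8/9) * X \<le> P \<Longrightarrow> Q \<le> (16/63) * X \<Longrightarrow>
        Y \<le> Z + W \<Longrightarrow> Z \<le> (1/4) * X \<Longrightarrow> (97/252) * X \<le> W + V"
  by linarith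

lemma lin2: "0 < (A::real) \<Longrightarrow> 97/252 * A \<le> Y \<Longrightarrow> 4 * Y < A \<Longrightarrow> False" by linarith

lemma final_arith:
  fixes x0 u \<alpha> T \<eta> E B :: real
  assumes x0: "0 < x0" and u: "0 < u" "u \<le> \<alpha> / 8" and al: "0 < \<alpha>" "\<alpha> < 1" and T: "0 < T"
    and B: "B = \<alpha> * T" and eta: "0 < \<eta>" "\<eta> \<le> \<alpha> * u / 12"
    and E: "E \<le> 3 * T * \<eta> / x0 + \<eta> / x0^2"
    and Tbig: "4 * (\<eta> + 2) < \<alpha> * T * u * x0"
    and H: "2 * (T / x0 - 1 / x0^2) + B * (1 / x0 - 1 / (x0 + u * x0)) - E \<le> T / (x0 + u * x0) + T / (x0 - u * x0)"
  shows False
proof -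
  have u1: "u \<le> 1/8" using u al by linarith
  have uu: "u * u \<le> 1/64" using u u1 mult_mono[of u "1/8" u "1/8"] by simp
  have pu: "1 + u > 0" "1 - u^2 > 0" using u uu by (auto simp: power2_eq_square)
  have nz: "x0 + u * x0 > 0" using x0 u by (simp add: add_pos_pos)
  have a: "1 / x0 - 1 / (x0 + u * x0) = u / (x0 * (1 + u))" using nz x0 u by (simp add: field_simps)
  have b: "T / (x0 + u * x0) + T / (x0 - u * x0) - 2 * (T / x0) = 2 * T * u^2 / (x0 * (1 - u^2))"
  proof -
    have p1: "x0 - u * x0 > 0" using x0 u1 by (simp add: algebra_simps)
    have p2: "x0 - u * (u * x0) > 0"
    proof -
      have "u * u \<le> 1/64" using u u1 mult_mono[of u "1/8" u "1/8"] by simp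
      hence "u * (u * x0) \<le> x0 / 64" using x0 mult_right_mono[of "u*u" "1/64" x0] by (simp add: mult.assoc)
      thus ?thesis using x0 by linarith
    qed
    show ?thesis using x0 u u1 nz p1 p2 by (simp add: field_simps power2_eq_square)
  qed
  have H2: "B * (u / (x0 * (1 + u))) - 2 * T * u^2 / (x0 * (1 - u^2)) \<le> E + 2 / x0^2"
    using H a b by (simp add: algebra_simps)
  have H3: "B * u / (1 + u) - 2 * T * u^2 / (1 - u^2) \<le> x0 * E + 2 / x0"
  proof -
    define P where "P = B * u / (1 + u)"
    define Q where "Q = 2 * T * u^2 / (1 - u^2)"
    have e1: "B * (u / (x0 * (1 + u))) = P / x0" unfolding P_def using x0 pu by (simp add: field_simps)
    have e2: "2 * T * u^2 / (x0 * (1 - u^2)) = Q / x0" unfolding Q_def using x0 pu by (simp add: field_simps)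
    have "(P - Q) / x0 \<le> E + 2 / x0^2" using H2 unfolding e1 e2 by (simp add: diff_divide_distrib)
    hence "x0 * ((P - Q) / x0) \<le> x0 * (E + 2 / x0^2)" using x0 by (intro mult_left_mono) auto
    moreover have "x0 * ((P - Q) / x0) = P - Q" using x0 by simp
    moreover have "x0 * (E + 2 / x0^2) = x0 * E + 2 / x0" using x0 by (simp add: field_simps power2_eq_square)
    ultimately show ?thesis unfolding P_def Q_def by simp
  qed
  have L1: "B * u / (1 + u) \<ge> (8/9) * (\<alpha> * T * u)"
  proof -
    have "(8/9) * (\<alpha> * T * u) * (1 + u) \<le> \<alpha> * T * u" 
    proof -
      have "(8/9) * (1 + u) \<le> 1" using u1 by simp
      moreover have "0 \<le> \<alpha> * T * u" using al T u by simp
      ultimately show ?thesis by (metis mult.commute mult.left_commute mult_left_le)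
    qed
    thus ?thesis using u B by (simp add: field_simps)
  qed
  have L2: "2 * T * u^2 / (1 - u^2) \<le> (16/63) * (\<alpha> * T * u)"
  proof -
    have "u^2 \<le> 1/64" using uu by (simp add: power2_eq_square)
    hence d: "1 - u^2 \<ge> 63/64" by simp
    have "u^2 \<le> u * (\<alpha> / 8)" using u by (simp add: power2_eq_square mult_left_mono)
    hence "2 * T * u^2 \<le> 2 * T * (u * (\<alpha> / 8))" using T by (intro mult_left_mono) auto
    hence "2 * T * u^2 \<le> (63/64) * ((16/63) * (\<alpha> * T * u))" by (simp add: algebra_simps)
    also have "\<dots> \<le> (1 - u^2) * ((16/63) * (\<alpha> * T * u))" using d al T u by (intro mult_right_mono) auto
    finally show ?thesis using d by (simp add: field_simps)
  qed
  have L3: "x0 * E \<le> 3 * T * \<eta> + \<eta> / x0"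
  proof -
    have "x0 * E \<le> x0 * (3 * T * \<eta> / x0 + \<eta> / x0^2)" using E x0 by (intro mult_left_mono) auto
    also have "\<dots> = 3 * T * \<eta> + \<eta> / x0" using x0 by (simp add: field_simps power2_eq_square)
    finally show ?thesis .
  qed
  have L4: "3 * T * \<eta> \<le> (1/4) * (\<alpha> * T * u)" using eta T by (simp add: field_simps)
  have g: "(97/252) * (\<alpha> * T * u) \<le> \<eta> / x0 + 2 / x0"
    by (rule lin[OF H3 L1 L2 L3 L4])
  hence "(97/252) * (\<alpha> * T * u) * x0 \<le> (\<eta> / x0 + 2 / x0) * x0" using x0 by (intro mult_right_mono) auto
  moreover have "(\<eta> / x0 + 2 / x0) * x0 = \<eta> + 2" using x0 by (simp add: field_simps)
  moreover have "(97/252) * (\<alpha> * T * u) * x0 = (97/252) * (\<alpha> * T * u * x0)" by (simp add: mult.assoc)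
  ultimately have h: "(97/252) * (\<alpha> * T * u * x0) \<le> \<eta> + 2" by simp
  have "0 < \<alpha> * T * u * x0" using al T u x0 by simp
  thus False using lin2 h Tbig by blast
qed

lemma W_nash:
  assumes "nash_eq N k T \<alpha> ka p \<sigma>" "0 < T" "0 < N"
  shows "bs_strategy N k p" "feasible N T \<alpha> ka \<sigma>"
    "\<And>p'. bs_strategy N k p' \<Longrightarrow> (\<Sum>i<N. FF (qm p i) (\<sigma> i) T) \<le> (\<Sum>i<N. FF (qm p' i) (\<sigma> i) T)"
    "\<And>\<sigma>'. feasible N T \<alpha> ka \<sigma>' \<Longrightarrow> (\<Sum>i<N. FF (qm p i) (\<sigma>' i) T) \<le> (\<Sum>i<N. FF (qm p i) (\<sigma> i) T)"
proof -
  have c: "0 < (1 / real T) * (1 / real N)" using assms by simp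
  show "bs_strategy N k p" "feasible N T \<alpha> ka \<sigma>" using assms(1) by (auto simp: nash_eq_def)
  show "(\<Sum>i<N. FF (qm p i) (\<sigma> i) T) \<le> (\<Sum>i<N. FF (qm p' i) (\<sigma> i) T)" if "bs_strategy N k p'" for p'
  proof -
    have "payoff N T p \<sigma> \<le> payoff N T p' \<sigma>" using assms(1) that by (auto simp: nash_eq_def)
    thus ?thesis unfolding payoff_eq using mult_le_cancel_left_pos[OF c] by blast
  qed
  show "(\<Sum>i<N. FF (qm p i) (\<sigma>' i) T) \<le> (\<Sum>i<N. FF (qm p i) (\<sigma> i) T)" if "feasible N T \<alpha> ka \<sigma>'" for \<sigma>'
  proof -
    have "payoff N T p \<sigma>' \<le> payoff N T p \<sigma>" using assms(1) that by (auto simp: nash_eq_def)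
    thus ?thesis unfolding payoff_eq using mult_le_cancel_left_pos[OF c] by blast
  qed
qed

lemma feasible_shift:
  assumes "0 < N" "feasible N T \<alpha> ka \<sigma>"
  shows "feasible N T \<alpha> ka (\<lambda>i. \<sigma> ((i + r) mod N))"
proof -
  have 1: "(\<Sum>i<N. \<Sum>t=1..T. 1 - real (of_bool (\<sigma> ((i + r) mod N) t))) = (\<Sum>i<N. \<Sum>t=1..T. 1 - real (of_bool (\<sigma> i t)))"
    using shift_sum[OF assms(1), of "\<lambda>j. \<Sum>t=1..T. 1 - real (of_bool (\<sigma> j t))" r] by simp
  have 2: "(\<Sum>i<N. 1 - real (of_bool (\<sigma> ((i + r) mod N) t))) = (\<Sum>i<N. 1 - real (of_bool (\<sigma> i t)))" for t
    using shift_sum[OF assms(1), of "\<lambda>j. 1 - real (of_bool (\<sigma> j t))" r] by simp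
  show ?thesis using assms(2) unfolding feasible_def 1 2 .
qed

lemma card_run: "M \<ge> 1 \<Longrightarrow> M + B \<le> T + 1 \<Longrightarrow> (\<Sum>t=1..T. 1 - real (of_bool (runp M B t))) = real B"
proof -
  assume a: "M \<ge> 1" "M + B \<le> T + 1"
  have "(\<Sum>t=1..T. 1 - real (of_bool (runp M B t))) = (\<Sum>t=1..T. if t \<in> {M..<M+B} then 1 else 0)"
    by (intro sum.cong) (auto simp: runp_def)
  also have "\<dots> = real (card ({1..T} \<inter> {M..<M+B}))" by (subst sum.inter_restrict[symmetric]) auto
  also have "{1..T} \<inter> {M..<M+B} = {M..<M+B}" using a by auto
  finally show ?thesis by simp
qed

lemma feasible_run:
  assumes "0 < N" "1 \<le> M" "M + B \<le> T" "real B \<le> \<alpha> * real T" "1 \<le> ka"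
  shows "feasible N T \<alpha> ka (\<lambda>i s. i \<noteq> 0 \<or> runp M B s)"
proof -
  have e: "1 - real (of_bool (i \<noteq> 0 \<or> runp M B t)) = (if i = 0 then 1 - real (of_bool (runp M B t)) else 0)" for i t
    by auto
  have slot: "(\<Sum>i<N. 1 - real (of_bool (i \<noteq> 0 \<or> runp M B t))) = 1 - real (of_bool (runp M B t))" for t
    unfolding e using assms(1) by (simp add: sum.delta)
  have tot: "(\<Sum>i<N. \<Sum>t=1..T. 1 - real (of_bool (i \<noteq> 0 \<or> runp M B t))) = (\<Sum>t=1..T. 1 - real (of_bool (runp M B t)))"
  proof -
    have "(\<Sum>i<N. \<Sum>t=1..T. 1 - real (of_bool (i \<noteq> 0 \<or> runp M B t))) = (\<Sum>t=1..T. \<Sum>i<N. 1 - real (of_bool (i \<noteq> 0 \<or> runp M B t)))"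
      by (rule sum.swap)
    thus ?thesis by (simp only: slot)
  qed
  show ?thesis unfolding feasible_def tot slot using card_run[of M B T] assms by auto
qed

lemma bcnt_le_row: "real (bcnt \<rho> T) \<le> (\<Sum>t=1..T. 1 - real (of_bool (\<rho> t)))"
proof -
  have "(\<Sum>t=1..T. 1 - real (of_bool (\<rho> t))) = (\<Sum>t=1..T. if \<not> \<rho> t then 1 else 0)" by (intro sum.cong) auto
  also have "\<dots> = real (card {t\<in>{1..T}. \<not> \<rho> t})" by (simp add: sum.If_cases Int_def)
  finally have e: "(\<Sum>t=1..T. 1 - real (of_bool (\<rho> t))) = real (card {t\<in>{1..T}. \<not> \<rho> t})" .
  have "bcnt \<rho> T \<le> card {t\<in>{1..T}. \<not> \<rho> t}" unfolding bcnt_def by (intro card_mono) auto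
  thus ?thesis unfolding e by simp
qed

lemma bcnt_total:
  assumes "feasible N T \<alpha> ka \<sigma>"
  shows "(\<Sum>i<N. real (bcnt (\<sigma> i) T)) \<le> \<alpha> * real T"
proof -
  have "(\<Sum>i<N. real (bcnt (\<sigma> i) T)) \<le> (\<Sum>i<N. \<Sum>t=1..T. 1 - real (of_bool (\<sigma> i t)))"
    by (intro sum_mono bcnt_le_row)
  thus ?thesis using assms unfolding feasible_def by linarith
qed

lemma cnt_bcnt: "cnt \<rho> 1 T + bcnt \<rho> T = T - 1"
proof -
  have "{s\<in>{1..<T}. \<rho> s} \<union> {s\<in>{1..<T}. \<not> \<rho> s} = {1..<T}" by auto
  moreover have "card ({s\<in>{1..<T}. \<rho> s} \<union> {s\<in>{1..<T}. \<not> \<rho> s}) = card {s\<in>{1..<T}. \<rho> s} + card {s\<in>{1..<T}. \<not> \<rho> s}"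
    by (rule card_Un_disjoint) auto
  ultimately show ?thesis unfolding cnt_def bcnt_def by simp
qed

lemma bcnt0_clean: "bcnt \<rho> T = 0 \<Longrightarrow> \<forall>s\<in>{1..<T}. \<rho> s"
  unfolding bcnt_def by auto

lemma C_bounds:
  assumes "0 < x" "x \<le> 1"
  shows "real T / x - 1 / x^2 \<le> FF x clean T" "FF x clean T \<le> real T / x"
proof -
  have "FF x clean T = (\<Sum>t\<in>{1..T}. (1 - (1 - x) ^ t) / x)"
    unfolding FF_def using assms by (intro sum.cong) (auto simp: ee_clean)
  also have "\<dots> = real T / x - (\<Sum>t\<in>{1..T}. (1 - x) ^ t) / x"
    by (simp add: diff_divide_distrib sum_subtractf sum_divide_distrib)
  finally have e: "FF x clean T = real T / x - (\<Sum>t\<in>{1..T}. (1 - x) ^ t) / x" .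
  have g: "(\<Sum>t\<in>{1..T}. (1 - x) ^ t) = (1 - x) * (1 - (1 - x) ^ T) / x"
    using geo_sum[of "1 - x" T] assms by simp
  have c: "0 \<le> 1 - x" "1 - x \<le> 1" "0 \<le> (1 - x) ^ T" "(1 - x) ^ T \<le> 1" using assms by (auto intro: power_le_one)
  have "0 \<le> (1 - x) * (1 - (1 - x) ^ T)" using c by simp
  moreover have "(1 - x) * (1 - (1 - x) ^ T) \<le> 1" using c by (intro mult_le_one) auto
  ultimately have s: "0 \<le> (\<Sum>t\<in>{1..T}. (1 - x) ^ t)" "(\<Sum>t\<in>{1..T}. (1 - x) ^ t) \<le> 1 / x"
    unfolding g using assms by (auto simp: divide_right_mono)
  have "(\<Sum>t\<in>{1..T}. (1 - x) ^ t) / x \<le> (1 / x) / x" using s assms by (intro divide_right_mono) auto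
  thus "real T / x - 1 / x^2 \<le> FF x clean T" unfolding e by (simp add: power2_eq_square)
  show "FF x clean T \<le> real T / x" unfolding e using s assms by simp
qed



lemma lin3a:
  fixes E X Y z b :: real
  assumes "E \<le> X + Y" "X \<le> (2 * b + 1) / 12" "Y \<le> z / 12" "1 + z < 4 * b"
  shows "E < b / 2"
  using assms by (simp add: field_simps)

lemma lin3:
  fixes E X Y z :: real and B :: nat
  assumes "E \<le> X + Y" "X \<le> real (2 * B + 1) / 12" "Y \<le> z / 12" "1 + z < 4 * real B"
  shows "E < real B / 2"
proof -
  have "real (2 * B + 1) = 2 * real B + 1" by simp
  thus ?thesis using assms lin3a[of E X Y "real B" z] by simp
qed

lemma lin4:
  fixes C0 P0 E Cp Cm Pp t0 tp tm D :: real
  assumes "2 * C0 + P0 - E \<le> Cp + Cm + Pp" "t0 \<le> C0" "Cp \<le> tp" "Cm \<le> tm" "P0 - Pp = D"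
  shows "2 * t0 + D - E \<le> tp + tm"
  using assms by linarith

theorem theorem16:
  fixes N k ka :: nat and \<alpha> :: real
  assumes "N \<ge> 2" "1 \<le> k" "k < N" "ka \<ge> 1" "0 < \<alpha>" "\<alpha> < 1"
  shows "\<exists>T0. \<forall>T\<ge>T0. \<alpha> * real T \<in> \<int> \<longrightarrow>
           \<not> (\<exists>p \<sigma>. nash_eq N k T \<alpha> ka p \<sigma>)"
proof -
  have N0: "0 < N" using assms by simp
  define x0 where "x0 = real k / real N"
  have x0: "0 < x0" "x0 < 1" using assms by (auto simp: x0_def)
  define a where "a = aa N k"
  have a: "0 < a" using aa_pos assms by (simp add: a_def)
  define u where "u = min (\<alpha>/8) (a/x0)"
  have u1: "u \<le> \<alpha>/8" unfolding u_def by (rule min.cobounded1)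
  have u0: "0 < u" unfolding u_def using a x0 assms by simp
  note u = u0 u1
  have ux: "u * x0 \<le> a"
  proof -
    have "u * x0 \<le> (a / x0) * x0" using x0 by (intro mult_right_mono) (auto simp: u_def)
    thus ?thesis using x0 by simp
  qed
  define \<eta> where "\<eta> = min (x0/12) (\<alpha>*u/12)"
  have eta: "0 < \<eta>" "\<eta> \<le> x0/12" "\<eta> \<le> \<alpha>*u/12" using x0 u assms by (auto simp: \<eta>_def)
  obtain K where K: "(1 - x0)^K < \<eta>" using real_arch_pow_inv[of \<eta> "1 - x0"] eta x0 by auto
  define M where "M = Suc K"
  have M1: "1 \<le> M" by (simp add: M_def)
  have cJ: "(1 - x0)^J \<le> \<eta>" if "M \<le> J" for J
  proof -
    have "(1 - x0)^J \<le> (1 - x0)^K" using that x0 by (intro power_decreasing) (auto simp: M_def)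
    thus ?thesis using K by simp
  qed
  have cM: "(1 - x0)^M \<le> \<eta>" using cJ by simp
  define R where "R = 1 + (2 * real M + 3) / (1 - \<alpha>) + (1 + 1/x0) / (4 * \<alpha>) + 4 * (\<eta> + 2) / (\<alpha> * u * x0)"
  have Rt: "0 \<le> (2 * real M + 3) / (1 - \<alpha>)" "0 \<le> (1 + 1/x0) / (4 * \<alpha>)" "0 \<le> 4 * (\<eta> + 2) / (\<alpha> * u * x0)"
    using assms x0 u eta by auto
  show ?thesis
  proof (intro exI[of _ "nat \<lceil>R\<rceil>"] allI impI notI)
    fix T assume T0: "nat \<lceil>R\<rceil> \<le> T" and Ti: "\<alpha> * real T \<in> \<int>" and ex: "\<exists>p \<sigma>. nash_eq N k T \<alpha> ka p \<sigma>"
    obtain p \<sigma> where ne: "nash_eq N k T \<alpha> ka p \<sigma>" using ex by blast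
    have TR: "R \<le> real T"
    proof -
      have "R \<le> real (nat \<lceil>R\<rceil>)" by linarith
      also have "\<dots> \<le> real T" using T0 by simp
      finally show ?thesis .
    qed
    have T1: "1 \<le> real T" using TR Rt unfolding R_def by linarith
    hence Tpos: "0 < T" by simp
    have T2: "2 * real M + 3 \<le> (1 - \<alpha>) * real T"
    proof -
      have "(2 * real M + 3) / (1 - \<alpha>) \<le> real T" using TR Rt unfolding R_def by linarith
      thus ?thesis using assms by (simp add: pos_divide_le_eq mult.commute)
    qed
    have T3: "1 + 1/x0 < 4 * \<alpha> * real T"
    proof -
      have "(1 + 1/x0) / (4 * \<alpha>) < real T" using TR Rt unfolding R_def by linarith
      thus ?thesis using assms by (simp add: pos_divide_less_eq mult.commute mult.left_commute)
    qed
    have T4: "4 * (\<eta> + 2) < \<alpha> * real T * u * x0"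
    proof -
      have "4 * (\<eta> + 2) / (\<alpha> * u * x0) < real T" using TR Rt unfolding R_def by linarith
      moreover have "0 < \<alpha> * u * x0" using assms u x0 by simp
      ultimately have "4 * (\<eta> + 2) < real T * (\<alpha> * u * x0)" by (simp add: pos_divide_less_eq)
      thus ?thesis by (simp add: algebra_simps)
    qed
    obtain z :: int where z: "\<alpha> * real T = of_int z" using Ti by (auto elim: Ints_cases)
    have z0: "0 < z" using z assms Tpos by (metis mult_pos_pos of_int_0_less_iff of_nat_0_less_iff)
    define B where "B = nat z"
    have Breal: "real B = \<alpha> * real T" using z z0 by (simp add: B_def)
    have B1: "1 \<le> B" using z0 by (simp add: B_def)
    have MBT: "M + B + M \<le> T"
    proof -
      have "real (M + B + M) \<le> real T" using T2 Breal by (simp add: algebra_simps)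
      thus ?thesis by linarith
    qed
    have BT: "B \<le> T" using MBT by simp
    have B4: "1 + 1/x0 < 4 * real B" using T3 Breal by simp
    note W = W_nash[OF ne Tpos N0]
    define q where "q = qm p"
    have sumq: "(\<Sum>i\<in>{..<N}. q i) = real (card {..<N}) * x0"
      using sum_qm[OF W(1)] x0 N0 by (simp add: q_def x0_def)
    have q1: "\<forall>i\<in>{..<N}. q i \<le> 1" by (simp add: q_def qm_range)
    have BSU: "(\<Sum>i<N. FF (q i) (\<sigma> i) T) \<le> (\<Sum>i<N. FF x0 (\<sigma> i) T)"
    proof -
      have "(\<Sum>i<N. FF (q i) (\<sigma> i) T) \<le> (\<Sum>i<N. FF (qm (UU N k) i) (\<sigma> i) T)"
        unfolding q_def using assms by (intro W(3) bs_UU) auto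
      also have "\<dots> = (\<Sum>i<N. FF x0 (\<sigma> i) T)"
        using assms by (intro sum.cong) (auto simp: qm_UU x0_def)
      finally show ?thesis .
    qed
    have shift: "(\<Sum>i<N. FF (q i) (\<sigma> ((i + r) mod N)) T) \<le> (\<Sum>i<N. FF (q i) (\<sigma> i) T)" for r
      unfolding q_def using W(4)[OF feasible_shift[OF N0 W(2), of r]] .
    have allpairs: "(\<Sum>j<N. \<Sum>i<N. FF (q i) (\<sigma> j) T) \<le> real N * (\<Sum>i<N. FF (q i) (\<sigma> i) T)"
    proof -
      have "(\<Sum>r<N. \<Sum>i<N. FF (q i) (\<sigma> ((i + r) mod N)) T) \<le> (\<Sum>r<N. \<Sum>i<N. FF (q i) (\<sigma> i) T)"
        by (intro sum_mono shift)
      also have "\<dots> = real N * (\<Sum>i<N. FF (q i) (\<sigma> i) T)" by simp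
      finally have 1: "(\<Sum>r<N. \<Sum>i<N. FF (q i) (\<sigma> ((i + r) mod N)) T) \<le> real N * (\<Sum>i<N. FF (q i) (\<sigma> i) T)" .
      have "(\<Sum>r<N. \<Sum>i<N. FF (q i) (\<sigma> ((i + r) mod N)) T) = (\<Sum>i<N. \<Sum>r<N. FF (q i) (\<sigma> ((i + r) mod N)) T)"
        by (rule sum.swap)
      also have "\<dots> = (\<Sum>i<N. \<Sum>j<N. FF (q i) (\<sigma> j) T)"
      proof (rule sum.cong)
        fix i assume "i \<in> {..<N}"
        show "(\<Sum>r<N. FF (q i) (\<sigma> ((i + r) mod N)) T) = (\<Sum>j<N. FF (q i) (\<sigma> j) T)"
          using shift_sum[OF N0, of "\<lambda>j. FF (q i) (\<sigma> j) T" i] by (simp add: add.commute)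
      qed simp
      also have "\<dots> = (\<Sum>j<N. \<Sum>i<N. FF (q i) (\<sigma> j) T)" by (rule sum.swap)
      finally show ?thesis using 1 by simp
    qed
    have jen: "real N * FF x0 (\<sigma> j) T \<le> (\<Sum>i<N. FF (q i) (\<sigma> j) T)" for j
      using FF_jensen[of "{..<N}" q x0 "\<sigma> j" T] q1 sumq x0 by simp
    have eq0: "(\<Sum>i<N. FF (q i) (\<sigma> 0) T) \<le> real N * FF x0 (\<sigma> 0) T"
    proof -
      define D where "D j = (\<Sum>i<N. FF (q i) (\<sigma> j) T) - real N * FF x0 (\<sigma> j) T" for j
      have Dnn: "0 \<le> D j" for j using jen[of j] by (simp add: D_def)
      have "(\<Sum>j<N. D j) = (\<Sum>j<N. \<Sum>i<N. FF (q i) (\<sigma> j) T) - real N * (\<Sum>j<N. FF x0 (\<sigma> j) T)"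
        by (simp add: D_def sum_subtractf sum_distrib_left)
      also have "\<dots> \<le> 0" using allpairs BSU N0 by (smt (verit) mult_left_mono of_nat_0_le_iff)
      finally have "(\<Sum>j<N. D j) \<le> 0" .
      moreover have "D 0 \<le> (\<Sum>j<N. D j)" by (rule member_le_sum) (use Dnn N0 in auto)
      ultimately show ?thesis by (simp add: D_def)
    qed
    have bt: "(\<Sum>i<N. real (bcnt (\<sigma> i) T)) \<le> real B" using bcnt_total[OF W(2)] Breal by simp
    have b0: "real (bcnt (\<sigma> 0) T) \<le> real B"
    proof -
      have "real (bcnt (\<sigma> 0) T) \<le> (\<Sum>i<N. real (bcnt (\<sigma> i) T))" by (rule member_le_sum) (use N0 in auto)
      thus ?thesis using bt by simp
    qed
    have cnt0: "2 \<le> cnt (\<sigma> 0) 1 T"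
    proof -
      have "cnt (\<sigma> 0) 1 T + bcnt (\<sigma> 0) T = T - 1" by (rule cnt_bcnt)
      moreover have "real B + 3 \<le> real T" using T2 Breal by (simp add: algebra_simps)
      ultimately show ?thesis using b0 by linarith
    qed
    obtain tw where tw: "1 < tw" "tw \<le> T" "cnt (\<sigma> 0) 1 tw = 2" using window2[OF cnt0] by blast
    have qx0: "\<forall>i\<in>{..<N}. q i = x0"
      by (rule FF_jensen_eq[of "{..<N}" q x0 "\<sigma> 0" T 1 tw]) (use q1 x0 sumq eq0 tw in auto)
    have Wq: "(\<Sum>i<N. FF (qm p i) (\<sigma>' i) T) = (\<Sum>i<N. FF x0 (\<sigma>' i) T)" for \<sigma>'
      using qx0 by (intro sum.cong) (auto simp: q_def)
    have Wsplit: "(\<Sum>i<N. FF x (\<sigma>' i) T) = real N * FF x clean T + (\<Sum>i<N. GG x (\<sigma>' i) T)" for x \<sigma>'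
      by (simp add: GG_def sum_subtractf)
    define \<sigma>s where "\<sigma>s = (\<lambda>(i::nat) s. i \<noteq> 0 \<or> runp M B s)"
    have feas_s: "feasible N T \<alpha> ka \<sigma>s"
      unfolding \<sigma>s_def by (rule feasible_run) (use N0 M1 MBT Breal assms in auto)
    have Gs: "(\<Sum>i<N. GG x0 (\<sigma>s i) T) = GG x0 (runp M B) T"
    proof -
      have "(\<Sum>i<N. GG x0 (\<sigma>s i) T) = (\<Sum>i<N. if i = 0 then GG x0 (runp M B) T else 0)"
      proof (rule sum.cong)
        fix i assume "i \<in> {..<N}"
        show "GG x0 (\<sigma>s i) T = (if i = 0 then GG x0 (runp M B) T else 0)"
        proof (cases "i = 0")
          case True
          have "\<sigma>s i = runp M B" using True by (simp add: \<sigma>s_def fun_eq_iff)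
          thus ?thesis using True by simp
        next
          case False
          have "\<sigma>s i = clean" using False by (simp add: \<sigma>s_def fun_eq_iff)
          thus ?thesis using False by (simp add: GG_def)
        qed
      qed simp
      also have "\<dots> = GG x0 (runp M B) T" using N0 by (simp add: sum.delta)
      finally show ?thesis .
    qed
    have advG: "GG x0 (runp M B) T \<le> (\<Sum>i<N. GG x0 (\<sigma> i) T)"
      using W(4)[OF feas_s] unfolding Wq Wsplit Gs by simp
    define E where "E = real (B + 1) * (1 - x0) ^ M / x0 + real B * (1 - x0) ^ (T - M - B) / x0 + (1 - x0) ^ M / x0 ^ 2"
    define \<phi> where "\<phi> x b = real b * (real b + 1) / 2 + real b * ((1 - x) / x)" for x b
    have lb: "\<phi> x0 B - E \<le> GG x0 (runp M B) T"
      using run_lb[OF x0 M1, of B T] MBT unfolding \<phi>_def E_def by simp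
    have ub: "GG x0 (\<sigma> i) T \<le> \<phi> x0 (bcnt (\<sigma> i) T)" for i
      unfolding \<phi>_def by (rule GG_ub) (use x0 Tpos in auto)
    have sumb: "(\<Sum>i<N. bcnt (\<sigma> i) T) \<le> B"
    proof -
      have "real (\<Sum>i<N. bcnt (\<sigma> i) T) \<le> real B" using bt by simp
      thus ?thesis by linarith
    qed
    have Ebound: "E \<le> real (2 * B + 1) * \<eta> / x0 + \<eta> / x0 ^ 2"
    proof -
      have J: "(1 - x0) ^ (T - M - B) \<le> \<eta>" using MBT by (intro cJ) simp
      have e1: "real (B + 1) * (1 - x0) ^ M / x0 \<le> real (B + 1) * \<eta> / x0"
        using cM x0 by (intro divide_right_mono mult_left_mono) auto
      have e2: "real B * (1 - x0) ^ (T - M - B) / x0 \<le> real B * \<eta> / x0"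
        using J x0 by (intro divide_right_mono mult_left_mono) auto
      have e3: "(1 - x0) ^ M / x0 ^ 2 \<le> \<eta> / x0 ^ 2"
        using cM x0 by (intro divide_right_mono) auto
      have "real (B + 1) * \<eta> / x0 + real B * \<eta> / x0 = real (2 * B + 1) * \<eta> / x0"
        using x0 by (simp add: field_simps)
      thus ?thesis using e1 e2 e3 unfolding E_def by linarith
    qed
    have Esmall: "E < real B / 2"
    proof -
      have f1: "real (2 * B + 1) * \<eta> / x0 \<le> real (2 * B + 1) / 12"
      proof -
        have "real (2 * B + 1) * \<eta> \<le> real (2 * B + 1) * (x0 / 12)" using eta by (intro mult_left_mono) auto
        thus ?thesis using x0 by (simp add: divide_le_eq field_simps)
      qed
      have f2: "\<eta> / x0 ^ 2 \<le> (1 / x0) / 12"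
      proof -
        have "\<eta> / x0 ^ 2 \<le> (x0 / 12) / x0 ^ 2" using eta x0 by (intro divide_right_mono) auto
        also have "\<dots> = (1 / x0) / 12" using x0 by (simp add: power2_eq_square field_simps)
        finally show ?thesis .
      qed
      show ?thesis by (rule lin3[OF Ebound f1 f2 B4])
    qed
    have conc_hyp: "(\<Sum>i<N. real (bcnt (\<sigma> i) T) * (real (bcnt (\<sigma> i) T) + 1) / 2 + real (bcnt (\<sigma> i) T) * ((1 - x0) / x0))
        \<ge> real B * (real B + 1) / 2 + real B * ((1 - x0) / x0) - E"
    proof -
      have "(\<Sum>i<N. GG x0 (\<sigma> i) T) \<le> (\<Sum>i<N. \<phi> x0 (bcnt (\<sigma> i) T))" by (intro sum_mono ub)
      thus ?thesis using advG lb unfolding \<phi>_def by linarith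
    qed
    obtain j where j: "j < N" "bcnt (\<sigma> j) T = B" "\<forall>i<N. i \<noteq> j \<longrightarrow> bcnt (\<sigma> i) T = 0"
      using concentration[OF sumb _ Esmall conc_hyp] x0 by auto
    have Gi0: "GG x (\<sigma> i) T = 0" if "i < N" "i \<noteq> j" "0 < x" "x \<le> 1" for i x
      using j that by (intro GG_clean bcnt0_clean) (use Tpos in auto)
    have Gj: "\<phi> x0 B - E \<le> GG x0 (\<sigma> j) T"
    proof -
      have "(\<Sum>i<N. GG x0 (\<sigma> i) T) = (\<Sum>i<N. if i = j then GG x0 (\<sigma> j) T else 0)"
        using Gi0 x0 by (intro sum.cong) auto
      also have "\<dots> = GG x0 (\<sigma> j) T" using j by (simp add: sum.delta)
      finally show ?thesis using advG lb by linarith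
    qed
    define l where "l = (if j = 0 then 1 else (0::nat))"
    have l: "l < N" "l \<noteq> j" using assms j by (auto simp: l_def)
    define \<delta> where "\<delta> = u * x0"
    define w where "w = \<delta> / a"
    have w: "0 \<le> w" "w \<le> 1" using ux a u x0 by (auto simp: w_def \<delta>_def)
    have wa: "w * a = \<delta>" using a by (simp add: w_def)
    define p' where "p' = mix w l j N k"
    have bsp': "bs_strategy N k p'" unfolding p'_def using w assms j by (intro bs_mix) auto
    have qp': "qm p' i = x0 + (if i = j then \<delta> else if i = l then - \<delta> else 0)" if "i < N" for i
      unfolding p'_def using qm_mix[OF w assms(2) _ l(1) j(1) l(2) that] assms
      by (simp add: x0_def a_def[symmetric] wa)
    have dev: "(\<Sum>i<N. FF x0 (\<sigma> i) T) \<le> (\<Sum>i<N. FF (qm p' i) (\<sigma> i) T)"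
      using W(3)[OF bsp'] unfolding Wq .
    have diff: "(\<Sum>i<N. FF (qm p' i) (\<sigma> i) T - FF x0 (\<sigma> i) T)
       = (FF (x0 + \<delta>) (\<sigma> j) T - FF x0 (\<sigma> j) T) + (FF (x0 - \<delta>) (\<sigma> l) T - FF x0 (\<sigma> l) T)"
    proof -
      have "(\<Sum>i<N. FF (qm p' i) (\<sigma> i) T - FF x0 (\<sigma> i) T) = (\<Sum>i\<in>{j, l}. FF (qm p' i) (\<sigma> i) T - FF x0 (\<sigma> i) T)"
      proof (rule sum.mono_neutral_right)
        show "finite {..<N}" by simp
        show "{j, l} \<subseteq> {..<N}" using j l by auto
        show "\<forall>i\<in>{..<N} - {j, l}. FF (qm p' i) (\<sigma> i) T - FF x0 (\<sigma> i) T = 0"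
        proof
          fix i assume "i \<in> {..<N} - {j, l}"
          hence "i < N" "i \<noteq> j" "i \<noteq> l" by auto
          hence "qm p' i = x0" using qp' by simp
          thus "FF (qm p' i) (\<sigma> i) T - FF x0 (\<sigma> i) T = 0" by simp
        qed
      qed
      also have "\<dots> = (FF (qm p' j) (\<sigma> j) T - FF x0 (\<sigma> j) T) + (FF (qm p' l) (\<sigma> l) T - FF x0 (\<sigma> l) T)"
        using l by simp
      finally show ?thesis using qp'[OF j(1)] qp'[OF l(1)] l by simp
    qed
    have xp1: "x0 + \<delta> \<le> 1" using qp'[OF j(1)] qm_range[of p' j] by simp
    have dlt: "\<delta> \<le> x0 / 8"
    proof -
      have "u * x0 \<le> (\<alpha>/8) * x0" by (rule mult_right_mono) (use u x0 in auto)
      also have "\<dots> \<le> (1/8) * x0" by (rule mult_right_mono) (use assms x0 in auto)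
      finally show ?thesis by (simp add: \<delta>_def)
    qed
    have d0: "0 \<le> \<delta>" using u x0 by (simp add: \<delta>_def)
    have xm: "0 < x0 - \<delta>" "x0 - \<delta> \<le> 1" using dlt x0 d0 by linarith+
    have xpp: "0 < x0 + \<delta>" using x0 d0 by linarith
    have l_cl: "FF x (\<sigma> l) T = FF x clean T" if "0 < x" "x \<le> 1" for x
      using Gi0[OF l that] by (simp add: GG_def)
    have jp: "FF (x0 + \<delta>) (\<sigma> j) T \<le> FF (x0 + \<delta>) clean T + \<phi> (x0 + \<delta>) B"
      using GG_ub[OF xpp xp1, of T "\<sigma> j"] Tpos j(2) unfolding GG_def \<phi>_def by simp
    have j0: "FF x0 (\<sigma> j) T \<ge> FF x0 clean T + \<phi> x0 B - E"
      using Gj unfolding GG_def by simp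
    have main: "2 * FF x0 clean T + \<phi> x0 B - E \<le> FF (x0 + \<delta>) clean T + FF (x0 - \<delta>) clean T + \<phi> (x0 + \<delta>) B"
    proof -
      have "0 \<le> (\<Sum>i<N. FF (qm p' i) (\<sigma> i) T - FF x0 (\<sigma> i) T)" using dev by (simp add: sum_subtractf)
      thus ?thesis unfolding diff using jp j0 l_cl[OF xm] l_cl[of x0] x0 by simp
    qed
    have Cb1: "real T / x0 - 1 / x0^2 \<le> FF x0 clean T" using C_bounds x0 by simp
    have Cb2: "FF (x0 + \<delta>) clean T \<le> real T / (x0 + \<delta>)" using C_bounds xpp xp1 by simp
    have Cb3: "FF (x0 - \<delta>) clean T \<le> real T / (x0 - \<delta>)" using C_bounds xm by simp
    have phid: "\<phi> x0 B - \<phi> (x0 + \<delta>) B = real B * (1 / x0 - 1 / (x0 + \<delta>))"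
      unfolding \<phi>_def using x0 xpp by (simp add: diff_divide_distrib algebra_simps)
    have HH: "2 * (real T / x0 - 1 / x0^2) + real B * (1 / x0 - 1 / (x0 + u * x0)) - E
        \<le> real T / (x0 + u * x0) + real T / (x0 - u * x0)"
      using lin4[OF main Cb1 Cb2 Cb3 phid] unfolding \<delta>_def .
    have E3: "E \<le> 3 * real T * \<eta> / x0 + \<eta> / x0^2"
    proof -
      have "real (2 * B + 1) \<le> 3 * real T" using BT B1 by linarith
      hence "real (2 * B + 1) * \<eta> / x0 \<le> 3 * real T * \<eta> / x0" using eta x0
        by (intro divide_right_mono mult_right_mono) auto
      thus ?thesis using Ebound by linarith
    qed
    show False
      by (rule final_arith[OF x0(1) u assms(5,6) _ Breal eta(1) eta(3) E3 T4 HH]) (use Tpos in simp)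
  qed
qed


end
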